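(* In the setting of the context, let $u$ and $v$ be respectively a viscosity subsolution and a viscosity supersolution of $\partial_tw+a(x)\cdot\nabla w=\mathcal{J}w$ on $\Sigma\times(0,\infty)$, with $u(x,0)\le v(x,0)$ for all $x\in\Sigma$. Then $u(x,t)\le v(x,t)$ for all $x\in\Sigma$ and $t>0$.
   Context: $D\ge1$, $\Sigma=\{x\in\mathbb{R}^D: x_k\ge0,\ \sum_{k=1}^Dx_k\le1\}$, $x_0=1-\sum_{k=1}^Dx_k$. $f_0,\dots,f_D:\Sigma\to[0,\infty)$ are Lipschitz, $\bar f(x)=\sum_{k=0}^Dx_kf_k(x)$, $a_k(x)=-(f_k(x)-\bar f(x))x_k$ ($k=1,\dots,D$). With constants $\lambda_{ij}>0$, $\gamma_{ij}\in(0,1]$, \[ \mathcal{J}\phi(x)=\sum_{\substack{i,j=1\\ i\neq j}}^D\lambda_{ij}f_i(x)[\phi(x+\gamma_{ij}x_i(e_j-e_i))-\phi(x)]+\sum_{i=1}^D\lambda_{i0}f_i(x)[\phi(x-\gamma_{i0}x_ie_i)-\phi(x)]+\sum_{j=1}^D\lambda_{0j}f_0(x)[\phi(x+\gamma_{0j}x_0e_j)-\phi(x)] \] (applied in $x$ at fixed $t$). A bounded upper semicontinuous function $w$ on $\Sigma\times[0,\infty)$ is a viscosity subsolution if for every smooth $\phi$ and every $(x,t)\in\Sigma\times(0,\infty)$ at which $w-\phi$ attains a global maximum with $w(x,t)=\phi(x,t)$, one has $\partial_t\phi(x,t)+a(x)\cdot\nabla\phi(x,t)\le\mathcal{J}\phi(x,t)$;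 a bounded lower semicontinuous $w$ is a viscosity supersolution if the analogous condition holds with global minimum and the reverse inequality. *)

theory Defs
  imports "HOL-Analysis.Analysis"
begin

text \<open>The simplex_D Sigma in R^D; coordinates indexed by the finite type 'n (D = CARD('n)).\<close>
definition simplex_D :: "(real^'n) set" where
  "simplex_D = {x. (\<forall>k. x $ k \<ge> 0) \<and> (\<Sum>k\<in>UNIV. x $ k) \<le> 1}"

definition x0 :: "real^'n \<Rightarrow> real" where
  "x0 x = 1 - (\<Sum>k\<in>UNIV. x $ k)"

fun Ck :: "nat \<Rightarrow> ('a::real_normed_vector \<Rightarrow> real) \<Rightarrow> bool" where
  "Ck 0 f = continuous_on UNIV f"
| "Ck (Suc k) f = ((\<forall>p. f differentiable (at p)) \<and>
                    (\<forall>v. Ck k (\<lambda>p. frechet_derivative f (at p) v)))"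

definition smooth :: "('a::real_normed_vector \<Rightarrow> real) \<Rightarrow> bool" where
  "smooth f = (\<forall>k. Ck k f)"

definition usc_on :: "'a::topological_space set \<Rightarrow> ('a \<Rightarrow> real) \<Rightarrow> bool" where
  "usc_on S w = (\<forall>p\<in>S. \<forall>c. w p < c \<longrightarrow> (\<forall>\<^sub>F q in at p within S. w q < c))"

definition lsc_on :: "'a::topological_space set \<Rightarrow> ('a \<Rightarrow> real) \<Rightarrow> bool" where
  "lsc_on S w = (\<forall>p\<in>S. \<forall>c. c < w p \<longrightarrow> (\<forall>\<^sub>F q in at p within S. c < w q))"

text \<open>fbar(x) = sum_{k=0}^D x_k f_k(x); f0 is f_0 and f k is f_k for k in 'n.\<close>
definition fbar :: "(real^'n \<Rightarrow> real) \<Rightarrow> ('n \<Rightarrow> real^'n \<Rightarrow> real) \<Rightarrow> real^'n \<Rightarrow> real" where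
  "fbar f0 f x = x0 x * f0 x + (\<Sum>k\<in>UNIV. x $ k * f k x)"

definition drift :: "(real^'n \<Rightarrow> real) \<Rightarrow> ('n \<Rightarrow> real^'n \<Rightarrow> real) \<Rightarrow> real^'n \<Rightarrow> real^'n" where
  "drift f0 f x = (\<chi> k. - (f k x - fbar f0 f x) * x $ k)"

text \<open>Jump operator. lam i j = lambda_ij (i ~= j), lamO i = lambda_i0, lamI j = lambda_0j;
  similarly gam, gamO, gamI for gamma.\<close>
definition Jop :: "(real^'n \<Rightarrow> real) \<Rightarrow> ('n \<Rightarrow> real^'n \<Rightarrow> real) \<Rightarrow>
    ('n \<Rightarrow> 'n \<Rightarrow> real) \<Rightarrow> ('n \<Rightarrow> real) \<Rightarrow> ('n \<Rightarrow> real) \<Rightarrow>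
    ('n \<Rightarrow> 'n \<Rightarrow> real) \<Rightarrow> ('n \<Rightarrow> real) \<Rightarrow> ('n \<Rightarrow> real) \<Rightarrow>
    (real^'n \<Rightarrow> real) \<Rightarrow> real^'n \<Rightarrow> real" where
  "Jop f0 f lam lamO lamI gam gamO gamI \<phi> x =
     (\<Sum>i\<in>UNIV. \<Sum>j\<in>UNIV - {i}. lam i j * f i x *
         (\<phi> (x + (gam i j * x $ i) *\<^sub>R (axis j 1 - axis i 1)) - \<phi> x))
   + (\<Sum>i\<in>UNIV. lamO i * f i x * (\<phi> (x - (gamO i * x $ i) *\<^sub>R axis i 1) - \<phi> x))
   + (\<Sum>j\<in>UNIV. lamI j * f0 x * (\<phi> (x + (gamI j * x0 x) *\<^sub>R axis j 1) - \<phi> x))"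

definition dom_st :: "((real^'n) \<times> real) set" where
  "dom_st = simplex_D \<times> {0..}"

definition visc_sub where
  "visc_sub f0 f lam lamO lamI gam gamO gamI (w :: (real^'n) \<times> real \<Rightarrow> real) \<longleftrightarrow>
     bounded (w ` dom_st) \<and> usc_on dom_st w \<and>
     (\<forall>\<phi> x t. smooth \<phi> \<and> x \<in> simplex_D \<and> t > 0 \<and> w (x, t) = \<phi> (x, t) \<and>
        (\<forall>p\<in>dom_st. w p - \<phi> p \<le> w (x, t) - \<phi> (x, t)) \<longrightarrow>
        frechet_derivative \<phi> (at (x, t)) (0, 1)
          + frechet_derivative \<phi> (at (x, t)) (drift f0 f x, 0)
        \<le> Jop f0 f lam lamO lamI gam gamO gamI (\<lambda>y. \<phi> (y, t)) x)"

definition visc_super where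
  "visc_super f0 f lam lamO lamI gam gamO gamI (w :: (real^'n) \<times> real \<Rightarrow> real) \<longleftrightarrow>
     bounded (w ` dom_st) \<and> lsc_on dom_st w \<and>
     (\<forall>\<phi> x t. smooth \<phi> \<and> x \<in> simplex_D \<and> t > 0 \<and> w (x, t) = \<phi> (x, t) \<and>
        (\<forall>p\<in>dom_st. w p - \<phi> p \<ge> w (x, t) - \<phi> (x, t)) \<longrightarrow>
        frechet_derivative \<phi> (at (x, t)) (0, 1)
          + frechet_derivative \<phi> (at (x, t)) (drift f0 f x, 0)
        \<ge> Jop f0 f lam lamO lamI gam gamO gamI (\<lambda>y. \<phi> (y, t)) x)"

end

theory Submission
  imports Defs
begin

lemma fd_add:
  assumes "f differentiable at p" "g differentiable at p"
  shows "frechet_derivative (\<lambda>p. f p + g p) (at p) = (\<lambda>v. frechet_derivative f (at p) v + frechet_derivative g (at p) v)"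
  by (rule frechet_derivative_at[symmetric], intro has_derivative_add)
     (use assms in \<open>simp_all add: frechet_derivative_works[symmetric]\<close>)

lemma fd_mult:
  fixes f g :: "'a::real_normed_vector \<Rightarrow> real"
  assumes "f differentiable at p" "g differentiable at p"
  shows "frechet_derivative (\<lambda>p. f p * g p) (at p) = (\<lambda>v. f p * frechet_derivative g (at p) v + frechet_derivative f (at p) v * g p)"
  by (rule frechet_derivative_at[symmetric], intro has_derivative_mult)
     (use assms in \<open>simp_all add: frechet_derivative_works[symmetric]\<close>)

lemma fd_const: "frechet_derivative (\<lambda>p. c) (at p) = (\<lambda>v. 0)"
  by (rule frechet_derivative_at[symmetric]) simp

lemma Ck_const: "Ck k (\<lambda>p. c)"
proof (induction k arbitrary: c)
  case 0 then show ?case by simp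
next
  case (Suc k) then show ?case by (simp add: fd_const)
qed

lemma Ck_Suc_diff: "Ck (Suc k) f \<Longrightarrow> f differentiable at p" by simp

lemma Ck_mono: "Ck (Suc k) f \<Longrightarrow> Ck k f"
proof (induction k arbitrary: f)
  case 0
  then have "\<forall>p. f differentiable at p" by simp
  then show ?case
    by (simp add: differentiable_imp_continuous_within continuous_at_imp_continuous_on)
next
  case (Suc k)
  then show ?case by simp
qed

lemma Ck_add: "Ck k f \<Longrightarrow> Ck k g \<Longrightarrow> Ck k (\<lambda>p. f p + g p)"
proof (induction k arbitrary: f g)
  case 0 then show ?case by (simp add: continuous_on_add)
next
  case (Suc k)
  have d: "\<And>p. f differentiable at p" "\<And>p. g differentiable at p" using Suc.prems by simp_all
  show ?case
    using Suc.prems Suc.IH by (simp add: d fd_add differentiable_add)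
qed

lemma Ck_mult:
  fixes f g :: "'a::real_normed_vector \<Rightarrow> real"
  shows "Ck k f \<Longrightarrow> Ck k g \<Longrightarrow> Ck k (\<lambda>p. f p * g p)"
proof (induction k arbitrary: f g)
  case 0 then show ?case by (simp add: continuous_on_mult)
next
  case (Suc k)
  have d: "\<And>p. f differentiable at p" "\<And>p. g differentiable at p" using Suc.prems by simp_all
  have fk: "Ck k f" "Ck k g" using Suc.prems Ck_mono by blast+
  have "\<forall>v. Ck k (\<lambda>p. f p * frechet_derivative g (at p) v + frechet_derivative f (at p) v * g p)"
  proof
    fix v
    have "Ck k (\<lambda>p. frechet_derivative g (at p) v)" "Ck k (\<lambda>p. frechet_derivative f (at p) v)"
      using Suc.prems by simp_all
    then show "Ck k (\<lambda>p. f p * frechet_derivative g (at p) v + frechet_derivative f (at p) v * g p)"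
      using Suc.IH fk Ck_add by blast
  qed
  then show ?case
    by (simp add: d fd_mult differentiable_mult)
qed

lemma Ck_cmult: "Ck k f \<Longrightarrow> Ck k (\<lambda>p. c * f p)"
  using Ck_mult[OF Ck_const] by blast

lemma Ck_diff: "Ck k f \<Longrightarrow> Ck k g \<Longrightarrow> Ck k (\<lambda>p. f p - g p)"
  using Ck_add[of k f "\<lambda>p. (-1) * g p"] Ck_cmult[of k g "-1"] by simp

lemma Ck_sum: "finite S \<Longrightarrow> (\<And>i. i \<in> S \<Longrightarrow> Ck k (f i)) \<Longrightarrow> Ck k (\<lambda>p. \<Sum>i\<in>S. f i p)"
proof (induction S rule: finite_induct)
  case empty then show ?case by (simp add: Ck_const)
next
  case (insert x F) then show ?case using Ck_add[of k "f x" "\<lambda>p. \<Sum>i\<in>F. f i p"] by simp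
qed

lemma Ck_prod:
  fixes f :: "'i \<Rightarrow> 'a::real_normed_vector \<Rightarrow> real"
  shows "finite S \<Longrightarrow> (\<And>i. i \<in> S \<Longrightarrow> Ck k (f i)) \<Longrightarrow> Ck k (\<lambda>p. \<Prod>i\<in>S. f i p)"
proof (induction S rule: finite_induct)
  case empty then show ?case by (simp add: Ck_const)
next
  case (insert x F) then show ?case using Ck_mult[of k "f x" "\<lambda>p. \<Prod>i\<in>F. f i p"] by simp
qed

lemma Ck_affine:
  assumes "bounded_linear l"
  shows "Ck k (\<lambda>p. l p + (c::real))"
proof (cases k)
  case 0 then show ?thesis
    by (simp add: continuous_on_add linear_continuous_on assms)
next
  case (Suc k')
  have hd: "((\<lambda>p. l p + c) has_derivative l) (at p)" for p
    using has_derivative_add[OF bounded_linear_imp_has_derivative[OF assms] has_derivative_const[of c]] by simp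
  then have "frechet_derivative (\<lambda>p. l p + c) (at p) = l" for p
    using frechet_derivative_at by metis
  moreover have "(\<lambda>p. l p + c) differentiable at p" for p using hd by (auto simp: differentiable_def)
  ultimately show ?thesis using Suc by (simp add: Ck_const)
qed

lemma Ck_quad:
  fixes l :: "'a::real_normed_vector \<Rightarrow> 'b::real_inner"
  assumes bl: "bounded_linear l"
  shows "Ck k (\<lambda>p. inner (l p - c) (l p - c))"
proof (cases k)
  case 0 then show ?thesis
    by (simp add: continuous_on_inner continuous_on_diff linear_continuous_on bl)
next
  case (Suc k')
  have hl: "(l has_derivative l) (at p)" for p using bl bounded_linear_imp_has_derivative by blast
  have hd: "((\<lambda>p. inner (l p - c) (l p - c)) has_derivative (\<lambda>v. inner (l p - c) (l v) + inner (l v) (l p - c))) (at p)" for p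
    using has_derivative_inner[OF has_derivative_diff[OF hl has_derivative_const] has_derivative_diff[OF hl has_derivative_const]]
    by simp
  then have fd: "frechet_derivative (\<lambda>p. inner (l p - c) (l p - c)) (at p) = (\<lambda>v. inner (l p - c) (l v) + inner (l v) (l p - c))" for p
    using frechet_derivative_at by metis
  have "Ck k' (\<lambda>p. inner (l p - c) (l v) + inner (l v) (l p - c))" for v
  proof -
    have bl2: "bounded_linear (\<lambda>p. 2 * inner (l p) (l v))"
      using bounded_linear_compose[OF bounded_linear_mult_right[of 2] bounded_linear_compose[OF bounded_linear_inner_left bl]] by (simp add: o_def)
    have "(\<lambda>p. inner (l p - c) (l v) + inner (l v) (l p - c)) = (\<lambda>p. 2 * inner (l p) (l v) + (- 2 * inner c (l v)))"
      by (auto simp: inner_diff_left inner_diff_right inner_commute)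
    then show ?thesis using Ck_affine[OF bl2, of k' "- 2 * inner c (l v)"] by simp
  qed
  moreover have "(\<lambda>p. inner (l p - c) (l p - c)) differentiable at p" for p using hd by (auto simp: differentiable_def)
  ultimately show ?thesis using Suc by (simp add: fd)
qed

lemma smooth_Ck: "smooth f \<Longrightarrow> Ck k f" by (simp add: smooth_def)

lemma smooth_diffble: "smooth f \<Longrightarrow> f differentiable at p"
  using smooth_Ck[of f "Suc 0"] by simp

lemma smooth_cont: "smooth f \<Longrightarrow> continuous_on UNIV f"
  using smooth_Ck[of f 0] by simp

lemma has_derivative_sqd:
  fixes c :: "'a::real_inner"
  shows "((\<lambda>p. inner (p - c) (p - c)) has_derivative (\<lambda>v. inner (p - c) v + inner v (p - c))) (at p)"
  using has_derivative_inner[OF has_derivative_diff[OF has_derivative_ident has_derivative_const] has_derivative_diff[OF has_derivative_ident has_derivative_const]]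
  by simp

lemma Ck_sqd: "Ck k (\<lambda>p. inner (p - c) (p - (c::'a::real_inner)))"
  using Ck_quad[OF bounded_linear_ident, of k c] by simp

lemma usc_ball:
  fixes w :: "'a::metric_space \<Rightarrow> real"
  assumes "usc_on A w" "q \<in> A" "e > 0"
  shows "\<exists>d>0. \<forall>p\<in>A. dist p q < d \<longrightarrow> w p < w q + e"
proof -
  have "\<forall>\<^sub>F p in at q within A. w p < w q + e" using assms unfolding usc_on_def by auto
  then obtain d where "d > 0" "\<forall>p\<in>A. 0 < dist p q \<and> dist p q < d \<longrightarrow> w p < w q + e"
    unfolding eventually_at by auto
  then show ?thesis using assms(3) by (metis dist_pos_lt less_add_same_cancel1)
qed

lemma cont_ball:
  fixes f :: "'a::metric_space \<Rightarrow> real"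
  assumes "continuous_on UNIV f" "e > 0"
  shows "\<exists>d>0. \<forall>p. dist p q < d \<longrightarrow> f q - e < f p"
proof -
  have "isCont f q" using assms(1) continuous_on_eq_continuous_at by blast
  then obtain d where "d > 0" "\<forall>p. dist p q < d \<longrightarrow> dist (f p) (f q) < e"
    using assms(2) unfolding continuous_at_eps_delta by (metis dist_commute)
  then show ?thesis by (metis abs_diff_less_iff dist_real_def)
qed

lemma ev_right_lt: "(d::real) > 0 \<Longrightarrow> \<forall>\<^sub>F r in at_right 0. r < d"
  unfolding eventually_at_right_field by auto

lemma bump:
  fixes w \<phi>0 :: "'a::real_inner \<Rightarrow> real"
  assumes usc: "usc_on A w" and sm: "smooth \<phi>0" and le: "\<forall>p\<in>A. w p \<le> \<phi>0 p"
   and fin: "finite S" and SA: "S \<subseteq> A" and p0: "p0 \<notin> S" and dpos: "\<delta> > 0"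
  shows "\<exists>\<phi>. smooth \<phi> \<and> \<phi> p0 = \<phi>0 p0 \<and> frechet_derivative \<phi> (at p0) = frechet_derivative \<phi>0 (at p0)
     \<and> (\<forall>p\<in>A. w p \<le> \<phi> p) \<and> (\<forall>q\<in>S. \<phi> q \<le> w q + \<delta>)"
proof -
  define g where "g q = max 0 (\<phi>0 q - w q - \<delta>/2)" for q
  define N where "N c p = inner (p - c) (p - c)" for c p :: 'a
  define M where "M q r = (norm (q - p0) + r)^2 * (\<Prod>q'\<in>S-{q}. (norm (q - q') + r)^2)" for q and r::real
  have Nn: "N c p = (norm (p - c))^2" for c p by (simp add: N_def power2_norm_eq_inner)
  have M0pos: "M q 0 > 0" if "q \<in> S" for q
    unfolding M_def using that p0 fin by (auto intro!: prod_pos mult_pos_pos)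
  have e1: "\<forall>\<^sub>F r in at_right (0::real). 0 < r" by (rule eventually_at_right_less)
  have e2: "\<forall>\<^sub>F r in at_right 0. \<forall>q\<in>S. \<forall>p\<in>A. norm (p - q) < r \<longrightarrow> w p < w q + \<delta>/4 \<and> \<phi>0 q - \<delta>/4 < \<phi>0 p"
  proof (rule eventually_ball_finite[OF fin], rule ballI)
    fix q assume q: "q \<in> S"
    obtain d1 where d1: "d1 > 0" "\<forall>p\<in>A. dist p q < d1 \<longrightarrow> w p < w q + \<delta>/4"
      using usc_ball[OF usc, of q "\<delta>/4"] q SA dpos by auto
    obtain d2 where d2: "d2 > 0" "\<forall>p. dist p q < d2 \<longrightarrow> \<phi>0 q - \<delta>/4 < \<phi>0 p"
      using cont_ball[OF smooth_cont[OF sm], of "\<delta>/4" q] dpos by auto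
    show "\<forall>\<^sub>F r in at_right 0. \<forall>p\<in>A. norm (p - q) < r \<longrightarrow> w p < w q + \<delta>/4 \<and> \<phi>0 q - \<delta>/4 < \<phi>0 p"
      using ev_right_lt[of "min d1 d2"] d1 d2
      by (auto elim!: eventually_mono simp: dist_norm)
  qed
  have e3: "\<forall>\<^sub>F r in at_right 0. \<forall>q\<in>S. g q * (1 - M q 0 / M q r) < \<delta>/2"
  proof (rule eventually_ball_finite[OF fin], rule ballI)
    fix q assume q: "q \<in> S"
    have "((\<lambda>r. M q r) \<longlongrightarrow> M q 0) (at_right 0)"
      unfolding M_def by (intro tendsto_intros) 
    then have "((\<lambda>r. g q * (1 - M q 0 / M q r)) \<longlongrightarrow> g q * (1 - M q 0 / M q 0)) (at_right 0)"
      using M0pos[OF q] by (intro tendsto_intros) auto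
    then have "((\<lambda>r. g q * (1 - M q 0 / M q r)) \<longlongrightarrow> 0) (at_right 0)"
      using M0pos[OF q] by simp
    then show "\<forall>\<^sub>F r in at_right 0. g q * (1 - M q 0 / M q r) < \<delta>/2"
      using dpos order_tendstoD(2)[of _ 0 _ "\<delta>/2"] by auto
  qed
  have e4: "\<forall>\<^sub>F r in at_right 0. \<forall>q\<in>S. \<forall>q'\<in>S. q \<noteq> q' \<longrightarrow> 2 * r < norm (q - q')"
  proof (rule eventually_ball_finite[OF fin], rule ballI, rule eventually_ball_finite[OF fin], rule ballI)
    fix q q' assume "q \<in> S" "q' \<in> S"
    show "\<forall>\<^sub>F r in at_right 0. q \<noteq> q' \<longrightarrow> 2 * r < norm (q - q')"
    proof (cases "q = q'")
      case False
      then have "norm (q - q') / 2 > 0" by simp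
      from ev_right_lt[OF this] show ?thesis by (rule eventually_mono) auto
    qed simp
  qed
  have "\<forall>\<^sub>F r in at_right 0. 0 < r \<and> (\<forall>q\<in>S. \<forall>p\<in>A. norm (p - q) < r \<longrightarrow> w p < w q + \<delta>/4 \<and> \<phi>0 q - \<delta>/4 < \<phi>0 p)
     \<and> (\<forall>q\<in>S. g q * (1 - M q 0 / M q r) < \<delta>/2) \<and> (\<forall>q\<in>S. \<forall>q'\<in>S. q \<noteq> q' \<longrightarrow> 2 * r < norm (q - q'))"
    using e1 e2 e3 e4 by eventually_elim auto
  then obtain b where "b > 0" and hb: "\<forall>y>0. y < b \<longrightarrow> 0 < y \<and> (\<forall>q\<in>S. \<forall>p\<in>A. norm (p - q) < y \<longrightarrow> w p < w q + \<delta>/4 \<and> \<phi>0 q - \<delta>/4 < \<phi>0 p)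
     \<and> (\<forall>q\<in>S. g q * (1 - M q 0 / M q y) < \<delta>/2) \<and> (\<forall>q\<in>S. \<forall>q'\<in>S. q \<noteq> q' \<longrightarrow> 2 * y < norm (q - q'))"
    unfolding eventually_at_right_field by auto
  define r where "r = b/2"
  have rpos: "r > 0" and r2: "\<forall>q\<in>S. \<forall>p\<in>A. norm (p - q) < r \<longrightarrow> w p < w q + \<delta>/4 \<and> \<phi>0 q - \<delta>/4 < \<phi>0 p"
    and r3: "\<forall>q\<in>S. g q * (1 - M q 0 / M q r) < \<delta>/2" and r4: "\<forall>q\<in>S. \<forall>q'\<in>S. q \<noteq> q' \<longrightarrow> 2 * r < norm (q - q')"
    using hb[rule_format, of r] \<open>b > 0\<close> unfolding r_def by auto
  have Mrpos: "M q r > 0" if "q \<in> S" for q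
    unfolding M_def using that p0 fin rpos by (auto intro!: prod_pos mult_pos_pos) (smt (verit) norm_ge_zero)+
  define H where "H q p = (\<Prod>q'\<in>S-{q}. N q' p) * (r^2 - N q p)" for q p
  define \<beta> where "\<beta> q p = N p0 p * H q p" for q p
  define \<alpha> where "\<alpha> q = g q / (r^2 * M q r)" for q
  define \<phi> where "\<phi> p = \<phi>0 p - (\<Sum>q\<in>S. \<alpha> q * \<beta> q p)" for p
  have gnn: "g q \<ge> 0" for q by (simp add: g_def)
  have anneg: "\<alpha> q \<ge> 0" if "q \<in> S" for q using Mrpos[OF that] gnn[of q] by (simp add: \<alpha>_def)
  have Nnn: "N c p \<ge> 0" for c p by (simp add: Nn)
  have smN: "Ck k (N c)" for k c unfolding N_def[abs_def] by (rule Ck_sqd)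
  have smH: "Ck k (H q)" for k q
    unfolding H_def by (intro Ck_mult Ck_prod Ck_diff Ck_const smN) (simp add: fin)
  have smb: "Ck k (\<beta> q)" for k q unfolding \<beta>_def by (intro Ck_mult smN smH)
  have sm\<phi>: "smooth \<phi>"
    unfolding smooth_def \<phi>_def by (auto intro!: Ck_diff Ck_sum Ck_cmult smb fin smooth_Ck[OF sm])
  have \<beta>p0: "\<beta> q p0 = 0" for q by (simp add: \<beta>_def N_def)
  have val: "\<phi> p0 = \<phi>0 p0" by (simp add: \<phi>_def \<beta>p0)
  have dN0: "((N p0) has_derivative (\<lambda>v. 0)) (at p0)"
    using has_derivative_sqd[of p0 p0] unfolding N_def[abs_def] by simp
  have dterm: "((\<lambda>p. \<alpha> q * \<beta> q p) has_derivative (\<lambda>v. 0)) (at p0)" for q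
  proof -
    have "H q differentiable at p0" using smH[of "Suc 0" q] by simp
    then obtain H' where hH: "(H q has_derivative H') (at p0)" unfolding differentiable_def by blast
    have "((\<lambda>p. N p0 p * H q p) has_derivative (\<lambda>v. N p0 p0 * H' v + 0 * H q p0)) (at p0)"
      using has_derivative_mult[OF dN0 hH] by simp
    then have "((\<lambda>p. N p0 p * H q p) has_derivative (\<lambda>v. 0)) (at p0)" by (simp add: N_def)
    from has_derivative_mult[OF has_derivative_const[of "\<alpha> q"] this]
    show ?thesis by (simp add: \<beta>_def)
  qed
  have "(\<phi> has_derivative (\<lambda>v. frechet_derivative \<phi>0 (at p0) v - (\<Sum>q\<in>S. 0))) (at p0)"
    unfolding \<phi>_def
    by (intro has_derivative_diff has_derivative_sum dterm)
       (use smooth_diffble[OF sm] frechet_derivative_works in blast)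
  then have der: "frechet_derivative \<phi> (at p0) = frechet_derivative \<phi>0 (at p0)"
    using frechet_derivative_at by fastforce
  have \<beta>neg: "\<beta> q p \<le> 0" if "r \<le> norm (p - q)" for q p
  proof -
    have "r^2 \<le> N q p" unfolding Nn using that rpos by (simp add: power_mono)
    moreover have "0 \<le> N p0 p * (\<Prod>q'\<in>S-{q}. N q' p)" by (simp add: Nnn prod_nonneg)
    ultimately show ?thesis unfolding \<beta>_def H_def
      by (metis diff_le_0_iff_le mult.assoc mult_nonneg_nonpos)
  qed
  have \<beta>in: "\<alpha> q * \<beta> q p \<le> g q" if q: "q \<in> S" and pq: "norm (p - q) < r" for q p
  proof -
    have E0: "0 \<le> N p0 p * (\<Prod>q'\<in>S-{q}. N q' p)" by (simp add: Nnn prod_nonneg)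
    have "N p0 p \<le> (norm (q - p0) + r)^2"
    proof -
      have "norm (p - p0) \<le> norm (p - q) + norm (q - p0)" using norm_triangle_ineq[of "p - q" "q - p0"] by simp
      then have "norm (p - p0) \<le> norm (q - p0) + r" using pq by simp
      then show ?thesis unfolding Nn by (simp add: power_mono)
    qed
    moreover have "(\<Prod>q'\<in>S-{q}. N q' p) \<le> (\<Prod>q'\<in>S-{q}. (norm (q - q') + r)^2)"
    proof (rule prod_mono, rule conjI)
      fix q' assume "q' \<in> S - {q}"
      show "0 \<le> N q' p" by (rule Nnn)
      have "norm (p - q') \<le> norm (p - q) + norm (q - q')" using norm_triangle_ineq[of "p - q" "q - q'"] by simp
      then have "norm (p - q') \<le> norm (q - q') + r" using pq by simp
      then show "N q' p \<le> (norm (q - q') + r)^2" unfolding Nn by (simp add: power_mono)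
    qed
    ultimately have EM: "N p0 p * (\<Prod>q'\<in>S-{q}. N q' p) \<le> M q r"
      unfolding M_def by (intro mult_mono) (auto simp: Nnn prod_nonneg)
    have "\<beta> q p \<le> N p0 p * (\<Prod>q'\<in>S-{q}. N q' p) * r^2"
      unfolding \<beta>_def H_def mult.assoc[symmetric] using E0 Nnn[of q p] by (intro mult_left_mono) auto
    also have "\<dots> \<le> M q r * r^2" using EM by (simp add: mult_right_mono)
    finally have "\<alpha> q * \<beta> q p \<le> \<alpha> q * (M q r * r^2)" using anneg[OF q] by (simp add: mult_left_mono)
    also have "\<dots> = g q" using Mrpos[OF q] rpos by (simp add: \<alpha>_def)
    finally show ?thesis .
  qed
  have above: "\<forall>p\<in>A. w p \<le> \<phi> p"
  proof
    fix p assume pA: "p \<in> A"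
    show "w p \<le> \<phi> p"
    proof (cases "\<exists>q\<in>S. norm (p - q) < r")
      case True
      then obtain q where q: "q \<in> S" "norm (p - q) < r" by blast
      have others: "\<alpha> q' * \<beta> q' p \<le> 0" if "q' \<in> S - {q}" for q'
      proof -
        have "2 * r < norm (q - q')" using r4 q that by auto
        moreover have "norm (q - q') \<le> norm (p - q) + norm (p - q')"
          using norm_triangle_ineq[of "q - p" "p - q'"] by (simp add: norm_minus_commute)
        ultimately have "r \<le> norm (p - q')" using q by simp
        then show ?thesis using \<beta>neg anneg that by (simp add: mult_nonneg_nonpos)
      qed
      have "(\<Sum>q'\<in>S. \<alpha> q' * \<beta> q' p) = \<alpha> q * \<beta> q p + (\<Sum>q'\<in>S-{q}. \<alpha> q' * \<beta> q' p)"
        using fin q by (simp add: sum.remove)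
      also have "\<dots> \<le> g q + 0" using \<beta>in[OF q] others by (intro add_mono sum_nonpos) auto
      finally have "\<phi>0 p - g q \<le> \<phi> p" by (simp add: \<phi>_def)
      moreover have "w p \<le> \<phi>0 p - g q"
      proof (cases "g q = 0")
        case True then show ?thesis using le pA by simp
      next
        case False
        then have "g q = \<phi>0 q - w q - \<delta>/2" by (simp add: g_def)
        moreover have "w p < w q + \<delta>/4 \<and> \<phi>0 q - \<delta>/4 < \<phi>0 p" using r2 q pA by blast
        ultimately show ?thesis by simp
      qed
      ultimately show ?thesis by simp
    next
      case False
      then have "\<alpha> q * \<beta> q p \<le> 0" if "q \<in> S" for q
        using \<beta>neg anneg that by (simp add: mult_nonneg_nonpos not_less)
      then have "(\<Sum>q\<in>S. \<alpha> q * \<beta> q p) \<le> 0" by (simp add: sum_nonpos)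
      moreover have "w p \<le> \<phi>0 p" using le pA by blast
      ultimately show ?thesis by (simp add: \<phi>_def)
    qed
  qed
  have atS: "\<phi> q \<le> w q + \<delta>" if q: "q \<in> S" for q
  proof -
    have z: "\<beta> q' q = 0" if "q' \<in> S - {q}" for q'
    proof -
      have "q \<in> S - {q'}" using q that by auto
      then have "(\<Prod>q''\<in>S-{q'}. N q'' q) = 0" using fin by (intro prod_zero) (auto simp: N_def intro!: bexI[of _ q])
      then show ?thesis by (simp add: \<beta>_def H_def)
    qed
    have "\<beta> q q = M q 0 * r^2"
      unfolding \<beta>_def H_def M_def by (simp add: Nn norm_minus_commute power_mult_distrib prod_power_distrib)
    have "(\<Sum>q'\<in>S. \<alpha> q' * \<beta> q' q) = \<alpha> q * \<beta> q q + (\<Sum>q'\<in>S-{q}. \<alpha> q' * \<beta> q' q)"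
      using fin q by (simp add: sum.remove)
    also have "\<dots> = g q * (M q 0 / M q r)"
      using z \<open>\<beta> q q = M q 0 * r^2\<close> Mrpos[OF q] rpos by (simp add: \<alpha>_def)
    finally have phq: "\<phi> q = \<phi>0 q - g q * (M q 0 / M q r)" by (simp add: \<phi>_def)
    show ?thesis
    proof (cases "g q = 0")
      case True then show ?thesis using phq dpos by (simp add: g_def max_def split: if_splits)
    next
      case False
      then have "g q = \<phi>0 q - w q - \<delta>/2" by (simp add: g_def)
      moreover have "g q * (1 - M q 0 / M q r) < \<delta>/2" using r3 q by blast
      ultimately show ?thesis using phq by (simp add: algebra_simps)
    qed
  qed
  show ?thesis using sm\<phi> val der above atS by blast
qed

lemma axis_comp: "(axis j (1::real)) $ k = (if k = j then 1 else 0)"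
  by (simp add: axis_def)

lemma sum_axis: "(\<Sum>k\<in>UNIV. (y + c *\<^sub>R axis j (1::real))$k) = (\<Sum>k\<in>UNIV. y$k) + c"
proof -
  have "\<And>k. (y + c *\<^sub>R axis j 1)$k = y$k + (if k = j then c else 0)" by (simp add: axis_comp)
  then show ?thesis by (simp add: sum.distrib)
qed

lemma jump1:
  fixes x :: "real^'n"
  assumes x: "x \<in> simplex_D" and g: "0 \<le> \<gamma>" "\<gamma> \<le> 1" and ij: "i \<noteq> j"
  shows "x + (\<gamma> * x$i) *\<^sub>R (axis j 1 - axis i 1) \<in> simplex_D"
proof -
  have xk: "\<forall>k. x$k \<ge> 0" and xs: "(\<Sum>k\<in>UNIV. x $ k) \<le> 1" using x by (auto simp: simplex_D_def)
  have "\<forall>k. (x + (\<gamma> * x$i) *\<^sub>R (axis j 1 - axis i 1)) $ k \<ge> 0"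
  proof
    fix k
    have "\<gamma> * x$i \<le> x$i" using g xk by (simp add: mult_left_le_one_le)
    moreover have "0 \<le> \<gamma> * x$i" using g xk by simp
    ultimately show "(x + (\<gamma> * x$i) *\<^sub>R (axis j 1 - axis i 1)) $ k \<ge> 0"
      using xk[rule_format, of k] ij by (auto simp: axis_comp)
  qed
  moreover have "(\<Sum>k\<in>UNIV. (x + (\<gamma> * x$i) *\<^sub>R (axis j 1 - axis i 1)) $ k) = (\<Sum>k\<in>UNIV. x $ k)"
    using sum_axis[of "x + (\<gamma> * x$i) *\<^sub>R axis j 1" "- (\<gamma> * x$i)" i] sum_axis[of x "\<gamma> * x$i" j]
    by (simp add: algebra_simps)
  ultimately show ?thesis using xs by (simp add: simplex_D_def)
qed

lemma jump2:
  fixes x :: "real^'n"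
  assumes x: "x \<in> simplex_D" and g: "0 \<le> \<gamma>" "\<gamma> \<le> 1"
  shows "x - (\<gamma> * x$i) *\<^sub>R axis i 1 \<in> simplex_D"
proof -
  have xk: "\<forall>k. x$k \<ge> 0" and xs: "(\<Sum>k\<in>UNIV. x $ k) \<le> 1" using x by (auto simp: simplex_D_def)
  have a: "\<gamma> * x$i \<le> x$i" using g xk by (simp add: mult_left_le_one_le)
  have b: "0 \<le> \<gamma> * x$i" using g xk by simp
  have "\<forall>k. (x - (\<gamma> * x$i) *\<^sub>R axis i 1) $ k \<ge> 0"
    using xk a by (auto simp: axis_comp)
  moreover have "(\<Sum>k\<in>UNIV. (x - (\<gamma> * x$i) *\<^sub>R axis i 1) $ k) = (\<Sum>k\<in>UNIV. x $ k) - \<gamma> * x$i"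
    using sum_axis[of x "- (\<gamma> * x$i)" i] by (simp add: algebra_simps)
  ultimately show ?thesis using xs b by (simp add: simplex_D_def)
qed

lemma jump3:
  fixes x :: "real^'n"
  assumes x: "x \<in> simplex_D" and g: "0 \<le> \<gamma>" "\<gamma> \<le> 1"
  shows "x + (\<gamma> * x0 x) *\<^sub>R axis j 1 \<in> simplex_D"
proof -
  have xk: "\<forall>k. x$k \<ge> 0" and xs: "(\<Sum>k\<in>UNIV. x $ k) \<le> 1" using x by (auto simp: simplex_D_def)
  have x0n: "x0 x \<ge> 0" using xs by (simp add: x0_def)
  have a: "\<gamma> * x0 x \<le> x0 x" using g x0n by (simp add: mult_left_le_one_le)
  have b: "0 \<le> \<gamma> * x0 x" using g x0n by simp
  have "\<forall>k. (x + (\<gamma> * x0 x) *\<^sub>R axis j 1) $ k \<ge> 0"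
    using xk b by (auto simp: axis_comp)
  moreover have "(\<Sum>k\<in>UNIV. (x + (\<gamma> * x0 x) *\<^sub>R axis j 1) $ k) = (\<Sum>k\<in>UNIV. x $ k) + \<gamma> * x0 x"
    by (rule sum_axis)
  ultimately show ?thesis using a by (simp add: simplex_D_def x0_def)
qed

lemma Jop_lin:
  "Jop f0 f lam lamO lamI gam gamO gamI (\<lambda>y. g y + c * h y) x
   = Jop f0 f lam lamO lamI gam gamO gamI g x + c * Jop f0 f lam lamO lamI gam gamO gamI h x"
proof -
  have eq: "\<And>L a b a' b'. L * ((a + c*b) - (a' + c*b')) = L*(a - a') + c*(L*(b-b'))" by algebra
  show ?thesis unfolding Jop_def
    by (simp only: eq sum.distrib sum_distrib_left[symmetric]) (simp add: algebra_simps)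
qed

lemma Jop_neg:
  "Jop f0 f lam lamO lamI gam gamO gamI (\<lambda>y. - g y) x = - Jop f0 f lam lamO lamI gam gamO gamI g x"
  using Jop_lin[of f0 f lam lamO lamI gam gamO gamI "\<lambda>y. 0" "-1" g x] by (simp add: Jop_def)

definition dests :: "('n \<Rightarrow> 'n \<Rightarrow> real) \<Rightarrow> ('n \<Rightarrow> real) \<Rightarrow> ('n \<Rightarrow> real) \<Rightarrow> real^'n \<Rightarrow> (real^'n) set" where
  "dests gam gamO gamI x = (\<lambda>(i,j). x + (gam i j * x$i) *\<^sub>R (axis j 1 - axis i 1)) ` UNIV
     \<union> range (\<lambda>i. x - (gamO i * x$i) *\<^sub>R axis i 1) \<union> range (\<lambda>j. x + (gamI j * x0 x) *\<^sub>R axis j 1)"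

lemma finite_dests: "finite (dests gam gamO gamI (x::real^'n::finite))"
  by (simp add: dests_def)

locale setting =
  fixes f0 :: "real^'n::finite \<Rightarrow> real" and f :: "'n \<Rightarrow> real^'n \<Rightarrow> real"
    and lam gam :: "'n \<Rightarrow> 'n \<Rightarrow> real" and lamO lamI gamO gamI :: "'n \<Rightarrow> real"
  assumes f0_nonneg: "\<And>x. x \<in> simplex_D \<Longrightarrow> f0 x \<ge> 0"
    and f_nonneg: "\<And>k x. x \<in> simplex_D \<Longrightarrow> f k x \<ge> 0"
    and lam_pos: "\<And>i j. i \<noteq> j \<Longrightarrow> lam i j > 0"
    and lamO_pos: "\<And>i. lamO i > 0"
    and lamI_pos: "\<And>j. lamI j > 0"
    and gam_range: "\<And>i j. i \<noteq> j \<Longrightarrow> 0 < gam i j \<and> gam i j \<le> 1"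
    and gamO_range: "\<And>i. 0 < gamO i \<and> gamO i \<le> 1"
    and gamI_range: "\<And>j. 0 < gamI j \<and> gamI j \<le> 1"
begin

lemma dests_in: "x \<in> simplex_D \<Longrightarrow> dests gam gamO gamI x \<subseteq> simplex_D"
  unfolding dests_def
  apply (auto intro!: jump2 jump3 simp: gamO_range gamI_range less_imp_le)
  subgoal for i j by (cases "i = j") (auto intro!: jump1 simp: gam_range less_imp_le)
  done

lemma Jop_mono:
  assumes x: "x \<in> simplex_D" and h: "\<forall>y\<in>dests gam gamO gamI x. \<psi>1 y - \<psi>1 x \<le> \<psi>2 y - \<psi>2 x"
  shows "Jop f0 f lam lamO lamI gam gamO gamI \<psi>1 x \<le> Jop f0 f lam lamO lamI gam gamO gamI \<psi>2 x"
proof -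
  have r1: "0 \<le> lam i j * f i x" if "i \<noteq> j" for i j using lam_pos[OF that] f_nonneg[OF x] by simp
  have r2: "0 \<le> lamO i * f i x" for i using lamO_pos[of i] f_nonneg[OF x] by simp
  have r3: "0 \<le> lamI j * f0 x" for j using lamI_pos[of j] f0_nonneg[OF x] by simp
  have h1: "\<psi>1 (x + (gam i j * x$i) *\<^sub>R (axis j 1 - axis i 1)) - \<psi>1 x \<le> \<psi>2 (x + (gam i j * x$i) *\<^sub>R (axis j 1 - axis i 1)) - \<psi>2 x" for i j
  proof -
    have "x + (gam i j * x$i) *\<^sub>R (axis j 1 - axis i 1) \<in> dests gam gamO gamI x"
      unfolding dests_def by (rule UnI1, rule UnI1, rule image_eqI[of _ _ "(i,j)"]) auto
    then show ?thesis using h by blast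
  qed
  have h2: "\<psi>1 (x - (gamO i * x$i) *\<^sub>R axis i 1) - \<psi>1 x \<le> \<psi>2 (x - (gamO i * x$i) *\<^sub>R axis i 1) - \<psi>2 x" for i
    using h unfolding dests_def by blast
  have h3: "\<psi>1 (x + (gamI j * x0 x) *\<^sub>R axis j 1) - \<psi>1 x \<le> \<psi>2 (x + (gamI j * x0 x) *\<^sub>R axis j 1) - \<psi>2 x" for j
    using h unfolding dests_def by blast
  show ?thesis unfolding Jop_def
    apply (intro add_mono sum_mono mult_left_mono)
    using h1 h2 h3 r1 r2 r3 by auto
qed

lemma subA:
  fixes w :: "(real^'n) \<times> real \<Rightarrow> real"
  assumes usc: "usc_on dom_st w"
  and P: "\<forall>\<phi> x t. smooth \<phi> \<and> x \<in> simplex_D \<and> t > 0 \<and> w (x, t) = \<phi> (x, t) \<and>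
        (\<forall>p\<in>dom_st. w p - \<phi> p \<le> w (x, t) - \<phi> (x, t)) \<longrightarrow>
        frechet_derivative \<phi> (at (x, t)) (0, 1)
          + frechet_derivative \<phi> (at (x, t)) (drift f0 f x, 0)
        \<le> Jop f0 f lam lamO lamI gam gamO gamI (\<lambda>y. \<phi> (y, t)) x"
  and sm: "smooth \<phi>0" and x: "x \<in> simplex_D" and t: "t > 0" and eq: "w (x,t) = \<phi>0 (x,t)"
  and le: "\<forall>p\<in>dom_st. w p \<le> \<phi>0 p"
  shows "frechet_derivative \<phi>0 (at (x, t)) (0, 1) + frechet_derivative \<phi>0 (at (x, t)) (drift f0 f x, 0)
     \<le> Jop f0 f lam lamO lamI gam gamO gamI (\<lambda>y. w (y, t)) x"
proof (rule field_le_epsilon)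
  fix e :: real assume e: "e > 0"
  define J where "J \<psi> = Jop f0 f lam lamO lamI gam gamO gamI \<psi> x" for \<psi>
  define chi where "chi y = (if y = x then 0 else (1::real))" for y
  define R where "R = J chi"
  define \<delta> where "\<delta> = e / (\<bar>R\<bar> + 1)"
  have \<delta>pos: "\<delta> > 0" using e by (simp add: \<delta>_def add_pos_nonneg)
  define S where "S = (\<lambda>y. (y, t)) ` dests gam gamO gamI x - {(x,t)}"
  have finS: "finite S" by (simp add: S_def finite_dests)
  have SA: "S \<subseteq> dom_st" using dests_in[OF x] t by (auto simp: S_def dom_st_def)
  obtain \<phi> where \<phi>: "smooth \<phi>" "\<phi> (x,t) = \<phi>0 (x,t)"
      "frechet_derivative \<phi> (at (x,t)) = frechet_derivative \<phi>0 (at (x,t))"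
      "\<forall>p\<in>dom_st. w p \<le> \<phi> p" "\<forall>q\<in>S. \<phi> q \<le> w q + \<delta>"
    using bump[OF usc sm le finS SA _ \<delta>pos, of "(x,t)"] by (auto simp: S_def)
  have "frechet_derivative \<phi>0 (at (x, t)) (0, 1) + frechet_derivative \<phi>0 (at (x, t)) (drift f0 f x, 0)
      = frechet_derivative \<phi> (at (x, t)) (0, 1) + frechet_derivative \<phi> (at (x, t)) (drift f0 f x, 0)"
    using \<phi>(3) by simp
  also have "\<dots> \<le> J (\<lambda>y. \<phi> (y, t))"
    using P[rule_format, of \<phi> x t] \<phi> x t eq unfolding J_def by auto
  also have "J (\<lambda>y. \<phi> (y, t)) \<le> J (\<lambda>y. w (y,t) + \<delta> * chi y)"
    unfolding J_def
  proof (rule Jop_mono[OF x], rule ballI)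
    fix y assume y: "y \<in> dests gam gamO gamI x"
    show "\<phi> (y,t) - \<phi> (x,t) \<le> (w (y,t) + \<delta> * chi y) - (w (x,t) + \<delta> * chi x)"
    proof (cases "y = x")
      case True then show ?thesis by simp
    next
      case False
      then have "(y,t) \<in> S" using y by (auto simp: S_def)
      then show ?thesis using \<phi>(2,5) eq False by (auto simp: chi_def)
    qed
  qed
  also have "\<dots> = J (\<lambda>y. w (y,t)) + \<delta> * R" unfolding J_def R_def by (rule Jop_lin)
  also have "\<dots> \<le> J (\<lambda>y. w (y,t)) + e"
  proof -
    have "\<delta> * R \<le> \<delta> * \<bar>R\<bar>" using \<delta>pos by (simp add: mult_left_mono)
    also have "\<dots> \<le> \<delta> * (\<bar>R\<bar> + 1)" using \<delta>pos by (simp add: mult_left_mono)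
    also have "\<dots> = e" unfolding \<delta>_def by (smt (verit) abs_ge_zero nonzero_eq_divide_eq)
    finally show ?thesis by simp
  qed
  finally show "frechet_derivative \<phi>0 (at (x, t)) (0, 1) + frechet_derivative \<phi>0 (at (x, t)) (drift f0 f x, 0)
     \<le> Jop f0 f lam lamO lamI gam gamO gamI (\<lambda>y. w (y, t)) x + e" unfolding J_def .
qed

end

definition lipb :: "(real^'n::finite \<Rightarrow> real) \<Rightarrow> bool" where
  "lipb g \<longleftrightarrow> (\<exists>L. \<forall>x\<in>simplex_D. \<forall>y\<in>simplex_D. \<bar>g x - g y\<bar> \<le> L * norm (x - y)) \<and> (\<exists>B. \<forall>x\<in>simplex_D. \<bar>g x\<bar> \<le> B)"

lemma simplex_comp: "x \<in> simplex_D \<Longrightarrow> 0 \<le> x$k \<and> x$k \<le> 1"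
proof -
  assume x: "x \<in> simplex_D"
  then have xk: "\<forall>k. x$k \<ge> 0" and xs: "(\<Sum>k\<in>UNIV. x $ k) \<le> 1" by (auto simp: simplex_D_def)
  have "x$k \<le> (\<Sum>k\<in>UNIV. x $ k)" using xk by (intro member_le_sum) auto
  then show ?thesis using xk xs by auto
qed

lemma simplex_norm: "x \<in> simplex_D \<Longrightarrow> norm x \<le> 1"
proof -
  assume x: "x \<in> simplex_D"
  then have xk: "\<forall>k. x$k \<ge> 0" and xs: "(\<Sum>k\<in>UNIV. x $ k) \<le> 1" by (auto simp: simplex_D_def)
  have "norm x \<le> (\<Sum>k\<in>UNIV. \<bar>x $ k\<bar>)" by (rule norm_le_l1_cart)
  also have "\<dots> = (\<Sum>k\<in>UNIV. x $ k)" using xk by simp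
  finally show ?thesis using xs by simp
qed

lemma zero_simplex: "0 \<in> simplex_D" by (simp add: simplex_D_def)

lemma x0_range: "x \<in> simplex_D \<Longrightarrow> 0 \<le> x0 x \<and> x0 x \<le> 1"
  using simplex_comp by (auto simp: simplex_D_def x0_def intro!: sum_nonneg)

lemma sum_comp_le: "\<bar>\<Sum>k\<in>UNIV. (z::real^'n::finite) $ k\<bar> \<le> real CARD('n) * norm z"
proof -
  have "\<bar>\<Sum>k\<in>UNIV. z $ k\<bar> \<le> (\<Sum>k\<in>UNIV. \<bar>z $ k\<bar>)" by (rule sum_abs)
  also have "\<dots> \<le> (\<Sum>k\<in>(UNIV::'n set). norm z)" by (intro sum_mono component_le_norm_cart)
  finally show ?thesis by simp
qed

lemma lipb_const: "lipb (\<lambda>x. c)"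
  unfolding lipb_def by (auto intro!: exI[of _ 0] exI[of _ "\<bar>c\<bar>"])

lemma lipb_comp: "lipb (\<lambda>x. x$k)"
  unfolding lipb_def
proof (intro conjI exI[of _ 1] exI[of _ 1] ballI)
  fix x y :: "real^'a" assume "x \<in> simplex_D" "y \<in> simplex_D"
  show "\<bar>x $ k - y $ k\<bar> \<le> 1 * norm (x - y)" using component_le_norm_cart[of "x - y" k] by simp
next
  fix x :: "real^'a" assume "x \<in> simplex_D"
  then show "\<bar>x $ k\<bar> \<le> 1" using simplex_comp by fastforce
qed

lemma lipb_x0: "lipb (x0 :: real^'n::finite \<Rightarrow> real)"
  unfolding lipb_def
proof (intro conjI)
  show "\<exists>L. \<forall>x\<in>simplex_D. \<forall>y\<in>simplex_D. \<bar>x0 x - x0 y\<bar> \<le> L * norm (x - (y::real^'n))"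
  proof (intro exI[of _ "real CARD('n)"] ballI)
    fix x y :: "real^'n" assume "x \<in> simplex_D" "y \<in> simplex_D"
    have "x0 x - x0 y = - (\<Sum>k\<in>UNIV. (x - y) $ k)" by (simp add: x0_def sum_subtractf)
    then show "\<bar>x0 x - x0 y\<bar> \<le> real CARD('n) * norm (x - y)" using sum_comp_le[of "x - y"] by simp
  qed
  show "\<exists>B. \<forall>x\<in>simplex_D. \<bar>x0 (x::real^'n)\<bar> \<le> B"
    using x0_range by (intro exI[of _ 1]) fastforce
qed

lemma lipb_add:
  fixes g h :: "real^'n::finite \<Rightarrow> real"
  shows "lipb g \<Longrightarrow> lipb h \<Longrightarrow> lipb (\<lambda>x. g x + h x)"
  unfolding lipb_def
proof (elim conjE exE, intro conjI)
  fix L1 B1 L2 B2 assume 1: "\<forall>x\<in>simplex_D. \<forall>y\<in>simplex_D. \<bar>g x - g y\<bar> \<le> L1 * norm (x - y)" "\<forall>x\<in>simplex_D. \<bar>g x\<bar> \<le> B1"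
    and 2: "\<forall>x\<in>simplex_D. \<forall>y\<in>simplex_D. \<bar>h x - h y\<bar> \<le> L2 * norm (x - y)" "\<forall>x\<in>simplex_D. \<bar>h x\<bar> \<le> B2"
  show "\<exists>L. \<forall>x\<in>simplex_D. \<forall>y\<in>simplex_D. \<bar>g x + h x - (g y + h y)\<bar> \<le> L * norm (x - y)"
  proof (intro exI[of _ "L1 + L2"] ballI)
    fix x y :: "real^'n" assume "x \<in> simplex_D" "y \<in> simplex_D"
    then have "\<bar>g x - g y\<bar> \<le> L1 * norm (x - y)" "\<bar>h x - h y\<bar> \<le> L2 * norm (x - y)" using 1 2 by auto
    then show "\<bar>g x + h x - (g y + h y)\<bar> \<le> (L1 + L2) * norm (x - y)" by (simp add: algebra_simps)
  qed
  show "\<exists>B. \<forall>x\<in>simplex_D. \<bar>g x + h x\<bar> \<le> B"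
    using 1(2) 2(2) by (intro exI[of _ "B1 + B2"]) (auto intro: order_trans[OF abs_triangle_ineq] add_mono)
qed

lemma lipb_mult:
  fixes g h :: "real^'n::finite \<Rightarrow> real"
  shows "lipb g \<Longrightarrow> lipb h \<Longrightarrow> lipb (\<lambda>x. g x * h x)"
  unfolding lipb_def
proof (elim conjE exE, intro conjI)
  fix L1 B1 L2 B2 assume 1: "\<forall>x\<in>simplex_D. \<forall>y\<in>simplex_D. \<bar>g x - g y\<bar> \<le> L1 * norm (x - y)" "\<forall>x\<in>simplex_D. \<bar>g x\<bar> \<le> B1"
    and 2: "\<forall>x\<in>simplex_D. \<forall>y\<in>simplex_D. \<bar>h x - h y\<bar> \<le> L2 * norm (x - y)" "\<forall>x\<in>simplex_D. \<bar>h x\<bar> \<le> B2"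
  show "\<exists>L. \<forall>x\<in>simplex_D. \<forall>y\<in>simplex_D. \<bar>g x * h x - g y * h y\<bar> \<le> L * norm (x - y)"
  proof (intro exI[of _ "B1 * L2 + B2 * L1"] ballI)
    fix x y :: "real^'n" assume x: "x \<in> simplex_D" and y: "y \<in> simplex_D"
    have a: "\<bar>g x - g y\<bar> \<le> L1 * norm (x - y)" "\<bar>h x - h y\<bar> \<le> L2 * norm (x - y)" using 1 2 x y by auto
    have b: "\<bar>g x\<bar> \<le> B1" "\<bar>h y\<bar> \<le> B2" using 1 2 x y by auto
    have "g x * h x - g y * h y = g x * (h x - h y) + h y * (g x - g y)" by (simp add: algebra_simps)
    then have "\<bar>g x * h x - g y * h y\<bar> \<le> \<bar>g x\<bar> * \<bar>h x - h y\<bar> + \<bar>h y\<bar> * \<bar>g x - g y\<bar>"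
      by (metis abs_mult abs_triangle_ineq)
    also have "\<dots> \<le> B1 * (L2 * norm (x - y)) + B2 * (L1 * norm (x - y))"
      using a b by (intro add_mono mult_mono) auto
    finally show "\<bar>g x * h x - g y * h y\<bar> \<le> (B1 * L2 + B2 * L1) * norm (x - y)" by (simp add: algebra_simps)
  qed
  show "\<exists>B. \<forall>x\<in>simplex_D. \<bar>g x * h x\<bar> \<le> B"
    using 1(2) 2(2) by (intro exI[of _ "B1 * B2"]) (auto simp: abs_mult intro!: mult_mono)
qed

lemma lipb_uminus: "lipb g \<Longrightarrow> lipb (\<lambda>x. - g x)"
  using lipb_mult[OF lipb_const[of "-1"]] by simp

lemma lipb_diff: "lipb g \<Longrightarrow> lipb h \<Longrightarrow> lipb (\<lambda>x. g x - h x)"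
proof -
  assume "lipb g" "lipb h"
  then have "lipb (\<lambda>x. g x + - h x)" using lipb_add lipb_uminus by blast
  then show ?thesis by simp
qed

lemma lipb_sum: "finite I \<Longrightarrow> (\<And>i. i \<in> I \<Longrightarrow> lipb (g i)) \<Longrightarrow> lipb (\<lambda>x. \<Sum>i\<in>I. g i x)"
proof (induction I rule: finite_induct)
  case empty then show ?case by (simp add: lipb_const)
next
  case (insert a F) then show ?case using lipb_add[of "g a" "\<lambda>x. \<Sum>i\<in>F. g i x"] by simp
qed

lemma lipb_of_lip:
  fixes g :: "real^'n::finite \<Rightarrow> real"
  shows "C-lipschitz_on simplex_D g \<Longrightarrow> lipb g"
  unfolding lipb_def lipschitz_on_def
proof (elim conjE, intro conjI)
  assume C: "0 \<le> C" and h: "\<forall>x\<in>simplex_D. \<forall>y\<in>simplex_D. dist (g x) (g y) \<le> C * dist x y"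
  then show "\<exists>L. \<forall>x\<in>simplex_D. \<forall>y\<in>simplex_D. \<bar>g x - g y\<bar> \<le> L * norm (x - y)"
    by (auto simp: dist_norm)
  show "\<exists>B. \<forall>x\<in>simplex_D. \<bar>g x\<bar> \<le> B"
  proof (intro exI[of _ "\<bar>g 0\<bar> + C"] ballI)
    fix x :: "real^'n" assume x: "x \<in> simplex_D"
    have "dist (g x) (g 0) \<le> C * dist x 0" using h x zero_simplex by blast
    then have "\<bar>g x - g 0\<bar> \<le> C * norm x" by (simp add: dist_norm)
    also have "\<dots> \<le> C" using simplex_norm[OF x] C by (simp add: mult_left_le)
    finally show "\<bar>g x\<bar> \<le> \<bar>g 0\<bar> + C" by linarith
  qed
qed

lemma lipb_family:
  fixes g :: "'i::finite \<Rightarrow> real^'n::finite \<Rightarrow> real"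
  assumes "\<And>i. lipb (g i)"
  shows "\<exists>L B. L \<ge> 0 \<and> B \<ge> 0 \<and> (\<forall>i. \<forall>x\<in>simplex_D. \<forall>y\<in>simplex_D. \<bar>g i x - g i y\<bar> \<le> L * norm (x - y) \<and> \<bar>g i x\<bar> \<le> B)"
proof -
  have "\<forall>i. \<exists>LB. (\<forall>x\<in>simplex_D. \<forall>y\<in>simplex_D. \<bar>g i x - g i y\<bar> \<le> fst LB * norm (x - y)) \<and> (\<forall>x\<in>simplex_D. \<bar>g i x\<bar> \<le> snd LB)"
    using assms unfolding lipb_def by auto
  then obtain LB where LB: "\<And>i. (\<forall>x\<in>simplex_D. \<forall>y\<in>simplex_D. \<bar>g i x - g i y\<bar> \<le> fst (LB i) * norm (x - y)) \<and> (\<forall>x\<in>simplex_D. \<bar>g i x\<bar> \<le> snd (LB i))"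
    by metis
  define L where "L = (\<Sum>i\<in>UNIV. \<bar>fst (LB i)\<bar>)"
  define B where "B = (\<Sum>i\<in>UNIV. \<bar>snd (LB i)\<bar>)"
  have Li: "fst (LB i) \<le> L" "\<bar>fst (LB i)\<bar> \<le> L" for i
    unfolding L_def using member_le_sum[of i UNIV "\<lambda>i. \<bar>fst (LB i)\<bar>"] by auto
  have Bi: "snd (LB i) \<le> B" for i
    unfolding B_def using member_le_sum[of i UNIV "\<lambda>i. \<bar>snd (LB i)\<bar>"] by auto
  have "\<forall>i. \<forall>x\<in>simplex_D. \<forall>y\<in>simplex_D. \<bar>g i x - g i y\<bar> \<le> L * norm (x - y) \<and> \<bar>g i x\<bar> \<le> B"
  proof (intro allI ballI conjI)
    fix i and x y :: "real^'n" assume x: "x \<in> simplex_D" and y: "y \<in> simplex_D"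
    have "\<bar>g i x - g i y\<bar> \<le> fst (LB i) * norm (x - y)" using LB x y by blast
    also have "\<dots> \<le> L * norm (x - y)" using Li[of i] by (intro mult_right_mono) auto
    finally show "\<bar>g i x - g i y\<bar> \<le> L * norm (x - y)" .
    show "\<bar>g i x\<bar> \<le> B" using LB[of i] Bi[of i] x by fastforce
  qed
  moreover have "L \<ge> 0" "B \<ge> 0" by (auto simp: L_def B_def intro!: sum_nonneg)
  ultimately show ?thesis by blast
qed

lemma term_bound:
  fixes c g1 g2 U0 U1 V0 V1 Lf Bf B K Nz N' nz \<epsilon> :: real
  assumes c: "c \<ge> 0" and e: "\<epsilon> > 0" and g: "\<bar>g1 - g2\<bar> \<le> Lf * nz" "\<bar>g1\<bar> \<le> Bf" "g1 \<ge> 0"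
    and V: "\<bar>V1 - V0\<bar> \<le> 2 * B" and mx: "U1 - V1 - N'/(2*\<epsilon>) \<le> U0 - V0 - Nz/(2*\<epsilon>)"
    and NK: "N' \<le> K * Nz" and K: "K \<ge> 0" and Nz: "Nz \<ge> 0"
  shows "c * g1 * (U1 - U0) - c * g2 * (V1 - V0) \<le> c * (Bf * K * Nz / (2*\<epsilon>) + Lf * 2 * B * nz)"
proof -
  have "(U1 - U0) - (V1 - V0) \<le> (N' - Nz) / (2*\<epsilon>)" using mx by (simp add: diff_divide_distrib)
  also have "\<dots> \<le> K * Nz / (2*\<epsilon>)" using NK Nz e by (intro divide_right_mono) auto
  finally have d: "(U1 - U0) - (V1 - V0) \<le> K * Nz / (2*\<epsilon>)" .
  have kn: "0 \<le> K * Nz / (2*\<epsilon>)" using K Nz e by simp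
  have "g1 * ((U1 - U0) - (V1 - V0)) \<le> g1 * (K * Nz / (2*\<epsilon>))" using d g(3) by (rule mult_left_mono)
  also have "\<dots> \<le> Bf * (K * Nz / (2*\<epsilon>))" using g(2,3) kn by (intro mult_right_mono) auto
  finally have A: "g1 * ((U1 - U0) - (V1 - V0)) \<le> Bf * (K * Nz / (2*\<epsilon>))" .
  have "(g1 - g2) * (V1 - V0) \<le> \<bar>g1 - g2\<bar> * \<bar>V1 - V0\<bar>" by (metis abs_ge_self abs_mult)
  also have "\<dots> \<le> (Lf * nz) * (2 * B)" using g(1) V by (intro mult_mono) auto
  finally have Bb: "(g1 - g2) * (V1 - V0) \<le> Lf * nz * (2 * B)" .
  have "g1 * (U1 - U0) - g2 * (V1 - V0) = g1 * ((U1 - U0) - (V1 - V0)) + (g1 - g2) * (V1 - V0)"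
    by (simp add: algebra_simps)
  also have "\<dots> \<le> Bf * K * Nz / (2*\<epsilon>) + Lf * 2 * B * nz" using A Bb by (simp add: algebra_simps)
  finally have "g1 * (U1 - U0) - g2 * (V1 - V0) \<le> Bf * K * Nz / (2*\<epsilon>) + Lf * 2 * B * nz" .
  then have "c * (g1 * (U1 - U0) - g2 * (V1 - V0)) \<le> c * (Bf * K * Nz / (2*\<epsilon>) + Lf * 2 * B * nz)"
    using c by (rule mult_left_mono)
  then show ?thesis by (simp add: algebra_simps)
qed

definition Phi where
  "Phi (u :: (real^'n::finite) \<times> real \<Rightarrow> real) v \<epsilon> \<eta> p q = u p - v q - inner (p - q) (p - q) / (2*\<epsilon>) - \<eta> * (snd p + snd q)"

lemma sq_sym: "inner (a - b) (a - b) = inner (b - a) (b - (a::'a::real_inner))"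
  by (metis inner_minus_left inner_minus_right minus_diff_eq minus_minus)

lemma testQ:
  fixes z :: "'a::real_inner \<times> real"
  shows "smooth (\<lambda>p. c + k * inner (p - z) (p - z) + \<eta> * snd p)"
    and "frechet_derivative (\<lambda>p. c + k * inner (p - z) (p - z) + \<eta> * snd p) (at p0)
         = (\<lambda>h. k * (2 * inner (p0 - z) h) + \<eta> * snd h)"
proof -
  have "Ck m (\<lambda>p. snd p + 0)" for m by (rule Ck_affine[OF bounded_linear_snd])
  then have "Ck m (\<lambda>p. c + k * inner (p - z) (p - z) + \<eta> * snd p)" for m
    by (intro Ck_add Ck_const Ck_cmult Ck_sqd) simp
  then show "smooth (\<lambda>p. c + k * inner (p - z) (p - z) + \<eta> * snd p)" by (simp add: smooth_def)
  have "((\<lambda>p. c + k * inner (p - z) (p - z) + \<eta> * snd p) has_derivative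
        (\<lambda>h. 0 + k * (inner (p0 - z) h + inner h (p0 - z)) + \<eta> * snd h)) (at p0)"
    by (intro has_derivative_add has_derivative_const has_derivative_mult_right has_derivative_sqd
        has_derivative_snd[OF has_derivative_ident])
  then show "frechet_derivative (\<lambda>p. c + k * inner (p - z) (p - z) + \<eta> * snd p) (at p0)
         = (\<lambda>h. k * (2 * inner (p0 - z) h) + \<eta> * snd h)"
    using frechet_derivative_at by (fastforce simp: inner_commute)
qed

lemma super_neg:
  assumes "visc_super f0 f lam lamO lamI gam gamO gamI v"
  shows "usc_on dom_st (\<lambda>p. - v p)"
    and "\<forall>\<phi> x t. smooth \<phi> \<and> x \<in> simplex_D \<and> t > 0 \<and> - v (x, t) = \<phi> (x, t) \<and>
        (\<forall>p\<in>dom_st. - v p - \<phi> p \<le> - v (x, t) - \<phi> (x, t)) \<longrightarrow>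
        frechet_derivative \<phi> (at (x, t)) (0, 1)
          + frechet_derivative \<phi> (at (x, t)) (drift f0 f x, 0)
        \<le> Jop f0 f lam lamO lamI gam gamO gamI (\<lambda>y. \<phi> (y, t)) x"
proof -
  have lsc: "lsc_on dom_st v" using assms by (simp add: visc_super_def)
  show "usc_on dom_st (\<lambda>p. - v p)" unfolding usc_on_def
  proof (intro ballI allI impI)
    fix p c assume p: "p \<in> dom_st" and c: "- v p < c"
    then have "\<forall>\<^sub>F q in at p within dom_st. - c < v q" using lsc unfolding lsc_on_def by auto
    then show "\<forall>\<^sub>F q in at p within dom_st. - v q < c" by (rule eventually_mono) auto
  qed
  show "\<forall>\<phi> x t. smooth \<phi> \<and> x \<in> simplex_D \<and> t > 0 \<and> - v (x, t) = \<phi> (x, t) \<and>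
        (\<forall>p\<in>dom_st. - v p - \<phi> p \<le> - v (x, t) - \<phi> (x, t)) \<longrightarrow>
        frechet_derivative \<phi> (at (x, t)) (0, 1)
          + frechet_derivative \<phi> (at (x, t)) (drift f0 f x, 0)
        \<le> Jop f0 f lam lamO lamI gam gamO gamI (\<lambda>y. \<phi> (y, t)) x"
  proof (intro allI impI, elim conjE)
    fix \<phi> x t assume sm: "smooth \<phi>" and x: "x \<in> simplex_D" and t: "t > 0" and eq: "- v (x, t) = \<phi> (x, t)"
      and mx: "\<forall>p\<in>dom_st. - v p - \<phi> p \<le> - v (x, t) - \<phi> (x, t)"
    define \<psi> where "\<psi> p = - \<phi> p" for p
    have sm\<psi>: "smooth \<psi>" using sm unfolding smooth_def \<psi>_def
      using Ck_cmult[of _ \<phi> "-1"] by simp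
    have fd: "frechet_derivative \<psi> (at (x,t)) = (\<lambda>h. - frechet_derivative \<phi> (at (x,t)) h)"
      unfolding \<psi>_def
      by (rule frechet_derivative_at[symmetric], rule has_derivative_minus)
         (use smooth_diffble[OF sm] frechet_derivative_works in blast)
    have "frechet_derivative \<psi> (at (x, t)) (0, 1) + frechet_derivative \<psi> (at (x, t)) (drift f0 f x, 0)
        \<ge> Jop f0 f lam lamO lamI gam gamO gamI (\<lambda>y. \<psi> (y, t)) x"
      using assms unfolding visc_super_def
      apply (elim conjE)
      apply (drule spec[of _ \<psi>], drule spec[of _ x], drule spec[of _ t])
      using sm\<psi> x t eq mx by (auto simp: \<psi>_def)
    then show "frechet_derivative \<phi> (at (x, t)) (0, 1) + frechet_derivative \<phi> (at (x, t)) (drift f0 f x, 0)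
        \<le> Jop f0 f lam lamO lamI gam gamO gamI (\<lambda>y. \<phi> (y, t)) x"
      using Jop_neg[of f0 f lam lamO lamI gam gamO gamI "\<lambda>y. \<phi> (y,t)" x] unfolding fd \<psi>_def by simp
  qed
qed

context setting begin

lemma core1:
  assumes sub: "visc_sub f0 f lam lamO lamI gam gamO gamI u"
    and super: "visc_super f0 f lam lamO lamI gam gamO gamI v"
    and e: "\<epsilon> > 0" and x: "x \<in> simplex_D" and y: "y \<in> simplex_D" and t: "t > 0" and s: "s > 0"
    and mx: "\<forall>p\<in>dom_st. \<forall>q\<in>dom_st. Phi u v \<epsilon> \<eta> p q \<le> Phi u v \<epsilon> \<eta> (x,t) (y,s)"
  shows "2*\<eta> + inner (x - y) (drift f0 f x - drift f0 f y) / \<epsilon>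
     \<le> Jop f0 f lam lamO lamI gam gamO gamI (\<lambda>x'. u (x',t)) x - Jop f0 f lam lamO lamI gam gamO gamI (\<lambda>y'. v (y',s)) y"
proof -
  define k where "k = 1/(2*\<epsilon>)"
  have xt: "(x,t) \<in> dom_st" and ys: "(y,s) \<in> dom_st" using x y t s by (auto simp: dom_st_def)
  have kk: "\<And>I. k * I = I / (2*\<epsilon>)" by (simp add: k_def)
  define cu where "cu = u (x,t) - (k * inner ((x,t) - (y,s)) ((x,t) - (y,s)) + \<eta> * t)"
  define \<phi>0 where "\<phi>0 p = cu + k * inner (p - (y,s)) (p - (y,s)) + \<eta> * snd p" for p
  have le1: "\<forall>p\<in>dom_st. u p \<le> \<phi>0 p"
  proof
    fix p :: "(real^'n) \<times> real" assume "p \<in> dom_st"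
    then have "Phi u v \<epsilon> \<eta> p (y,s) \<le> Phi u v \<epsilon> \<eta> (x,t) (y,s)" using mx ys by blast
    moreover have "\<eta> * (snd p + s) = \<eta> * snd p + \<eta> * s" "\<eta> * (t + s) = \<eta> * t + \<eta> * s" by (simp_all add: distrib_left)
    ultimately show "u p \<le> \<phi>0 p" unfolding Phi_def \<phi>0_def cu_def kk by simp
  qed
  have A1: "frechet_derivative \<phi>0 (at (x, t)) (0, 1) + frechet_derivative \<phi>0 (at (x, t)) (drift f0 f x, 0)
     \<le> Jop f0 f lam lamO lamI gam gamO gamI (\<lambda>y. u (y, t)) x"
  proof -
    have sm1: "smooth \<phi>0" unfolding \<phi>0_def[abs_def] by (rule testQ(1))
    have eq1: "u (x,t) = \<phi>0 (x,t)" by (simp add: \<phi>0_def cu_def)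
    show ?thesis using sub unfolding visc_sub_def by (intro subA[OF _ _ sm1 x t eq1 le1]) auto
  qed
  have d1: "frechet_derivative \<phi>0 (at (x, t)) (0, 1) + frechet_derivative \<phi>0 (at (x, t)) (drift f0 f x, 0)
      = (t - s)/\<epsilon> + \<eta> + inner (x - y) (drift f0 f x) / \<epsilon>"
    unfolding \<phi>0_def testQ(2) k_def using e by (simp add: field_simps)
  define cv where "cv = - v (y,s) - (k * inner ((y,s) - (x,t)) ((y,s) - (x,t)) + \<eta> * s)"
  define \<psi>0 where "\<psi>0 p = cv + k * inner (p - (x,t)) (p - (x,t)) + \<eta> * snd p" for p
  have le2: "\<forall>p\<in>dom_st. - v p \<le> \<psi>0 p"
  proof
    fix p :: "(real^'n) \<times> real" assume "p \<in> dom_st"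
    then have "Phi u v \<epsilon> \<eta> (x,t) p \<le> Phi u v \<epsilon> \<eta> (x,t) (y,s)" using mx xt by blast
    moreover have "\<eta> * (t + snd p) = \<eta> * t + \<eta> * snd p" "\<eta> * (t + s) = \<eta> * t + \<eta> * s" by (simp_all add: distrib_left)
    ultimately show "- v p \<le> \<psi>0 p" unfolding Phi_def \<psi>0_def cv_def kk
      using sq_sym[of "(x,t)" p] sq_sym[of "(x,t)" "(y,s)"] by simp
  qed
  note sn = super_neg[OF super]
  have A2: "frechet_derivative \<psi>0 (at (y, s)) (0, 1) + frechet_derivative \<psi>0 (at (y, s)) (drift f0 f y, 0)
     \<le> Jop f0 f lam lamO lamI gam gamO gamI (\<lambda>y'. - v (y', s)) y"
  proof -
    have sm1: "smooth \<psi>0" unfolding \<psi>0_def[abs_def] by (rule testQ(1))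
    have eq1: "- v (y,s) = \<psi>0 (y,s)" by (simp add: \<psi>0_def cv_def)
    show ?thesis by (rule subA[OF sn(1) sn(2) sm1 y s eq1 le2])
  qed
  have d2: "frechet_derivative \<psi>0 (at (y, s)) (0, 1) + frechet_derivative \<psi>0 (at (y, s)) (drift f0 f y, 0)
      = (s - t)/\<epsilon> + \<eta> + inner (y - x) (drift f0 f y) / \<epsilon>"
    unfolding \<psi>0_def testQ(2) k_def using e by (simp add: field_simps)
  have "inner (y - x) (drift f0 f y) = - inner (x - y) (drift f0 f y)"
    by (metis inner_minus_left minus_diff_eq)
  then show ?thesis
    using A1 A2 d1 d2 Jop_neg[of f0 f lam lamO lamI gam gamO gamI "\<lambda>y'. v (y',s)" y]
    by (simp add: inner_diff_right diff_divide_distrib add_divide_distrib)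
qed

end

lemma inner_self_norm: "inner z z = (norm z)^2" by (simp add: power2_norm_eq_inner)

lemma dest_bound1:
  fixes x y :: "real^'n::finite"
  assumes "\<bar>g\<bar> \<le> 1"
  shows "norm ((x + (g * x$i) *\<^sub>R (axis j 1 - axis i 1)) - (y + (g * y$i) *\<^sub>R (axis j 1 - axis i 1)))
     \<le> (3 + real CARD('n)) * norm (x - y)"
proof -
  have e: "(x + (g * x$i) *\<^sub>R (axis j 1 - axis i 1)) - (y + (g * y$i) *\<^sub>R (axis j 1 - axis i 1))
      = (x - y) + (g * (x - y)$i) *\<^sub>R (axis j 1 - axis i 1)" by (simp add: algebra_simps)
  have "norm (axis j (1::real) - axis i 1) \<le> 2"
    using norm_triangle_ineq4[of "axis j (1::real)" "axis i 1"] by simp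
  moreover have "\<bar>g * (x - y)$i\<bar> \<le> norm (x - y)"
    using assms component_le_norm_cart[of "x - y" i] by (simp add: abs_mult mult_le_one) (metis abs_ge_zero mult_left_le_one_le order_trans)
  ultimately have "norm ((g * (x - y)$i) *\<^sub>R (axis j 1 - axis i (1::real))) \<le> norm (x - y) * 2"
    by (simp add: mult_mono)
  then have "norm ((x - y) + (g * (x - y)$i) *\<^sub>R (axis j 1 - axis i 1)) \<le> norm (x - y) + norm (x - y) * 2"
    using norm_triangle_ineq[of "x - y" "(g * (x - y)$i) *\<^sub>R (axis j 1 - axis i 1)"] by linarith
  moreover have "(3 + real CARD('n)) * norm (x - y) = 3*norm(x-y) + real CARD('n)*norm(x-y)" by (simp add: algebra_simps)
  moreover have "0 \<le> real CARD('n) * norm (x - y)" "0 \<le> norm (x - y)" by simp_all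
  ultimately show ?thesis unfolding e by linarith
qed

lemma dest_bound2:
  fixes x y :: "real^'n::finite"
  assumes "\<bar>g\<bar> \<le> 1"
  shows "norm ((x - (g * x$i) *\<^sub>R axis i 1) - (y - (g * y$i) *\<^sub>R axis i 1))
     \<le> (3 + real CARD('n)) * norm (x - y)"
proof -
  have e: "(x - (g * x$i) *\<^sub>R axis i 1) - (y - (g * y$i) *\<^sub>R axis i 1)
      = (x - y) - (g * (x - y)$i) *\<^sub>R axis i 1" by (simp add: algebra_simps)
  have "\<bar>g * (x - y)$i\<bar> \<le> norm (x - y)"
    using assms component_le_norm_cart[of "x - y" i] by (simp add: abs_mult) (metis abs_ge_zero mult_left_le_one_le order_trans)
  then have "norm ((g * (x - y)$i) *\<^sub>R axis i (1::real)) \<le> norm (x - y)" by simp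
  then have "norm ((x - y) - (g * (x - y)$i) *\<^sub>R axis i 1) \<le> norm (x - y) + norm (x - y)"
    using norm_triangle_ineq4[of "x - y" "(g * (x - y)$i) *\<^sub>R axis i 1"] by linarith
  moreover have "(3 + real CARD('n)) * norm (x - y) = 3*norm(x-y) + real CARD('n)*norm(x-y)" by (simp add: algebra_simps)
  moreover have "0 \<le> real CARD('n) * norm (x - y)" "0 \<le> norm (x - y)" by simp_all
  ultimately show ?thesis unfolding e by linarith
qed

lemma dest_bound3:
  fixes x y :: "real^'n::finite"
  assumes "\<bar>g\<bar> \<le> 1"
  shows "norm ((x + (g * x0 x) *\<^sub>R axis j 1) - (y + (g * x0 y) *\<^sub>R axis j 1))
     \<le> (3 + real CARD('n)) * norm (x - y)"
proof -
  have e: "(x + (g * x0 x) *\<^sub>R axis j 1) - (y + (g * x0 y) *\<^sub>R axis j 1)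
      = (x - y) + (g * (x0 x - x0 y)) *\<^sub>R axis j 1" by (simp add: algebra_simps)
  have x0d: "x0 x - x0 y = - (\<Sum>k\<in>UNIV. (x - y) $ k)" by (simp add: x0_def sum_subtractf)
  have "\<bar>x0 x - x0 y\<bar> \<le> real CARD('n) * norm (x - y)" unfolding x0d using sum_comp_le[of "x - y"] by simp
  then have "\<bar>g * (x0 x - x0 y)\<bar> \<le> real CARD('n) * norm (x - y)"
    using assms by (simp add: abs_mult) (metis abs_ge_zero mult_left_le_one_le order_trans)
  then have "norm ((g * (x0 x - x0 y)) *\<^sub>R axis j (1::real)) \<le> real CARD('n) * norm (x - y)" by simp
  then have "norm ((x - y) + (g * (x0 x - x0 y)) *\<^sub>R axis j 1) \<le> norm (x - y) + real CARD('n) * norm (x - y)"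
    using norm_triangle_ineq[of "x - y" "(g * (x0 x - x0 y)) *\<^sub>R axis j 1"] by linarith
  moreover have "(3 + real CARD('n)) * norm (x - y) = 3*norm(x-y) + real CARD('n)*norm(x-y)" by (simp add: algebra_simps)
  moreover have "0 \<le> real CARD('n) * norm (x - y)" "0 \<le> norm (x - y)" by simp_all
  ultimately show ?thesis unfolding e by linarith
qed

lemma sq_bound:
  fixes a b :: "'a::real_inner"
  assumes "norm a \<le> K * norm b"
  shows "inner a a \<le> K^2 * inner b b"
proof -
  have "(norm a)^2 \<le> (K * norm b)^2" using assms by (simp add: power_mono)
  then show ?thesis by (simp add: inner_self_norm power_mult_distrib)
qed

lemma mx_dest:
  assumes mx: "\<forall>p\<in>dom_st. \<forall>q\<in>dom_st. Phi u v \<epsilon> \<eta> p q \<le> Phi u v \<epsilon> \<eta> (x,t) (y,s)"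
    and x': "x' \<in> simplex_D" and y': "y' \<in> simplex_D" and t: "t \<ge> 0" and s: "s \<ge> 0"
  shows "u (x',t) - v (y',s) - inner (x' - y') (x' - y') / (2*\<epsilon>) \<le> u (x,t) - v (y,s) - inner (x - y) (x - y) / (2*\<epsilon>)"
proof -
  have "Phi u v \<epsilon> \<eta> (x',t) (y',s) \<le> Phi u v \<epsilon> \<eta> (x,t) (y,s)" using mx x' y' t s by (auto simp: dom_st_def)
  then show ?thesis unfolding Phi_def by (simp add: add_divide_distrib)
qed

context setting begin

lemma core2:
  fixes u v :: "(real^'n) \<times> real \<Rightarrow> real"
  assumes e: "\<epsilon> > 0" and x: "x \<in> simplex_D" and y: "y \<in> simplex_D" and t: "t \<ge> 0" and s: "s \<ge> 0"
    and mx: "\<forall>p\<in>dom_st. \<forall>q\<in>dom_st. Phi u v \<epsilon> \<eta> p q \<le> Phi u v \<epsilon> \<eta> (x,t) (y,s)"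
    and vB: "\<forall>p\<in>dom_st. \<bar>v p\<bar> \<le> B"
    and f0L: "\<bar>f0 x - f0 y\<bar> \<le> Lf * norm (x - y)" "\<bar>f0 x\<bar> \<le> Bf"
    and fL: "\<And>k. \<bar>f k x - f k y\<bar> \<le> Lf * norm (x - y)" "\<And>k. \<bar>f k x\<bar> \<le> Bf"
  shows "Jop f0 f lam lamO lamI gam gamO gamI (\<lambda>x'. u (x',t)) x - Jop f0 f lam lamO lamI gam gamO gamI (\<lambda>y'. v (y',s)) y
     \<le> ((\<Sum>i\<in>UNIV. \<Sum>j\<in>UNIV - {i}. lam i j) + (\<Sum>i\<in>UNIV. lamO i) + (\<Sum>j\<in>UNIV. lamI j))
        * (Bf * (3 + real CARD('n))^2 * inner (x - y) (x - y) / (2*\<epsilon>) + Lf * 2 * B * norm (x - y))"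
proof -
  define K where "K = (3 + real CARD('n))^2"
  define E where "E = Bf * K * inner (x - y) (x - y) / (2*\<epsilon>) + Lf * 2 * B * norm (x - y)"
  have K: "K \<ge> 0" by (simp add: K_def)
  have Nz: "inner (x - y) (x - y) \<ge> 0" by simp
  have V: "\<bar>v (y',s) - v (y,s)\<bar> \<le> 2 * B" if "y' \<in> simplex_D" for y'
  proof -
    have "\<bar>v (y',s)\<bar> \<le> B" "\<bar>v (y,s)\<bar> \<le> B" using vB that y s by (auto simp: dom_st_def)
    then show ?thesis by linarith
  qed
  have T1: "lam i j * f i x * (u (x + (gam i j * x$i) *\<^sub>R (axis j 1 - axis i 1), t) - u (x,t))
          - lam i j * f i y * (v (y + (gam i j * y$i) *\<^sub>R (axis j 1 - axis i 1), s) - v (y,s)) \<le> lam i j * E"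
    if ij: "i \<noteq> j" for i j
  proof -
    have g: "\<bar>gam i j\<bar> \<le> 1" "0 \<le> gam i j" using gam_range[OF ij] by auto
    have x': "x + (gam i j * x$i) *\<^sub>R (axis j 1 - axis i 1) \<in> simplex_D" using jump1[OF x g(2) _ ij] g by auto
    have y': "y + (gam i j * y$i) *\<^sub>R (axis j 1 - axis i 1) \<in> simplex_D" using jump1[OF y g(2) _ ij] g by auto
    show ?thesis unfolding E_def
      by (rule term_bound[OF less_imp_le[OF lam_pos[OF ij]] e fL(1) fL(2) f_nonneg[OF x] V[OF y']
            mx_dest[OF mx x' y' t s] _ K Nz])
         (unfold K_def, rule sq_bound, rule dest_bound1[OF g(1)])
  qed
  have T2: "lamO i * f i x * (u (x - (gamO i * x$i) *\<^sub>R axis i 1, t) - u (x,t))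
          - lamO i * f i y * (v (y - (gamO i * y$i) *\<^sub>R axis i 1, s) - v (y,s)) \<le> lamO i * E" for i
  proof -
    have g: "\<bar>gamO i\<bar> \<le> 1" "0 \<le> gamO i" using gamO_range[of i] by auto
    have x': "x - (gamO i * x$i) *\<^sub>R axis i 1 \<in> simplex_D" using jump2[OF x g(2)] g by auto
    have y': "y - (gamO i * y$i) *\<^sub>R axis i 1 \<in> simplex_D" using jump2[OF y g(2)] g by auto
    show ?thesis unfolding E_def
      by (rule term_bound[OF less_imp_le[OF lamO_pos] e fL(1) fL(2) f_nonneg[OF x] V[OF y']
            mx_dest[OF mx x' y' t s] _ K Nz])
         (unfold K_def, rule sq_bound, rule dest_bound2[OF g(1)])
  qed
  have T3: "lamI j * f0 x * (u (x + (gamI j * x0 x) *\<^sub>R axis j 1, t) - u (x,t))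
          - lamI j * f0 y * (v (y + (gamI j * x0 y) *\<^sub>R axis j 1, s) - v (y,s)) \<le> lamI j * E" for j
  proof -
    have g: "\<bar>gamI j\<bar> \<le> 1" "0 \<le> gamI j" using gamI_range[of j] by auto
    have x': "x + (gamI j * x0 x) *\<^sub>R axis j 1 \<in> simplex_D" using jump3[OF x g(2)] g by auto
    have y': "y + (gamI j * x0 y) *\<^sub>R axis j 1 \<in> simplex_D" using jump3[OF y g(2)] g by auto
    show ?thesis unfolding E_def
      by (rule term_bound[OF less_imp_le[OF lamI_pos] e f0L(1) f0L(2) f0_nonneg[OF x] V[OF y']
            mx_dest[OF mx x' y' t s] _ K Nz])
         (unfold K_def, rule sq_bound, rule dest_bound3[OF g(1)])
  qed
  have S1: "(\<Sum>i\<in>UNIV. \<Sum>j\<in>UNIV - {i}. lam i j * f i x * (u (x + (gam i j * x$i) *\<^sub>R (axis j 1 - axis i 1), t) - u (x,t)))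
       - (\<Sum>i\<in>UNIV. \<Sum>j\<in>UNIV - {i}. lam i j * f i y * (v (y + (gam i j * y$i) *\<^sub>R (axis j 1 - axis i 1), s) - v (y,s)))
       \<le> (\<Sum>i\<in>UNIV. \<Sum>j\<in>UNIV - {i}. lam i j) * E"
    unfolding sum_subtractf[symmetric] sum_distrib_right
    by (intro sum_mono T1) auto
  have S2: "(\<Sum>i\<in>UNIV. lamO i * f i x * (u (x - (gamO i * x$i) *\<^sub>R axis i 1, t) - u (x,t)))
       - (\<Sum>i\<in>UNIV. lamO i * f i y * (v (y - (gamO i * y$i) *\<^sub>R axis i 1, s) - v (y,s)))
       \<le> (\<Sum>i\<in>UNIV. lamO i) * E"
    unfolding sum_subtractf[symmetric] sum_distrib_right
    by (intro sum_mono T2)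
  have S3: "(\<Sum>j\<in>UNIV. lamI j * f0 x * (u (x + (gamI j * x0 x) *\<^sub>R axis j 1, t) - u (x,t)))
       - (\<Sum>j\<in>UNIV. lamI j * f0 y * (v (y + (gamI j * x0 y) *\<^sub>R axis j 1, s) - v (y,s)))
       \<le> (\<Sum>j\<in>UNIV. lamI j) * E"
    unfolding sum_subtractf[symmetric] sum_distrib_right
    by (intro sum_mono T3)
  show ?thesis using S1 S2 S3 unfolding Jop_def E_def[symmetric] K_def[symmetric]
    by (simp add: algebra_simps)
qed

end

lemma fbar_lipb:
  assumes "lipb f0" "\<And>k. lipb (f k)"
  shows "lipb (fbar f0 f)"
proof -
  have "lipb (\<lambda>x. x0 x * f0 x + (\<Sum>k\<in>UNIV. x $ k * f k x))"
    by (intro lipb_add lipb_mult lipb_x0 assms lipb_sum lipb_comp) auto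
  then show ?thesis by (simp add: fbar_def[abs_def])
qed

lemma drift_bound:
  fixes f0 :: "real^'n::finite \<Rightarrow> real"
  assumes "lipb f0" "\<And>k. lipb (f k)"
  shows "\<exists>Ld\<ge>0. \<forall>x\<in>simplex_D. \<forall>y\<in>simplex_D. \<bar>inner (x - y) (drift f0 f x - drift f0 f y)\<bar> \<le> Ld * inner (x - y) (x - y)"
proof -
  have "lipb (\<lambda>x. drift f0 f x $ k)" for k
  proof -
    have "lipb (\<lambda>x. - (f k x - fbar f0 f x) * x $ k)"
      by (intro lipb_mult lipb_uminus lipb_diff assms fbar_lipb lipb_comp)
    then show ?thesis by (simp add: drift_def)
  qed
  from lipb_family[of "\<lambda>k x. drift f0 f x $ k", OF this]
  obtain L B where L: "L \<ge> 0" and LB: "\<forall>k. \<forall>x\<in>simplex_D. \<forall>y\<in>simplex_D. \<bar>drift f0 f x $ k - drift f0 f y $ k\<bar> \<le> L * norm (x - y)"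
    by blast
  show ?thesis
  proof (intro exI[of _ "real CARD('n) * L"] conjI ballI)
    show "0 \<le> real CARD('n) * L" using L by simp
    fix x y :: "real^'n" assume x: "x \<in> simplex_D" and y: "y \<in> simplex_D"
    have "\<bar>inner (x - y) (drift f0 f x - drift f0 f y)\<bar>
        = \<bar>\<Sum>k\<in>UNIV. (x - y)$k * (drift f0 f x $ k - drift f0 f y $ k)\<bar>"
      by (simp add: inner_vec_def)
    also have "\<dots> \<le> (\<Sum>k\<in>UNIV. \<bar>(x - y)$k\<bar> * \<bar>drift f0 f x $ k - drift f0 f y $ k\<bar>)"
      unfolding abs_mult[symmetric] by (rule sum_abs)
    also have "\<dots> \<le> (\<Sum>k\<in>(UNIV::'n set). norm (x - y) * (L * norm (x - y)))"
      using LB x y by (intro sum_mono mult_mono component_le_norm_cart) auto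
    also have "\<dots> = real CARD('n) * L * inner (x - y) (x - y)"
      by (simp add: inner_self_norm power2_eq_square algebra_simps)
    finally show "\<bar>inner (x - y) (drift f0 f x - drift f0 f y)\<bar> \<le> real CARD('n) * L * inner (x - y) (x - y)" .
  qed
qed

lemma usc_seq:
  fixes w :: "'a::metric_space \<Rightarrow> real"
  assumes "usc_on A w" "p \<in> A" "(X \<longlongrightarrow> p) F" "\<forall>\<^sub>F n in F. X n \<in> A" "e > 0"
  shows "\<forall>\<^sub>F n in F. w (X n) < w p + e"
proof -
  obtain d where d: "d > 0" "\<forall>q\<in>A. dist q p < d \<longrightarrow> w q < w p + e" using usc_ball[OF assms(1,2,5)] by blast
  have "\<forall>\<^sub>F n in F. dist (X n) p < d" using assms(3) d(1) tendsto_iff by blast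
  with assms(4) show ?thesis by eventually_elim (use d in blast)
qed

lemma lsc_seq:
  fixes w :: "'a::metric_space \<Rightarrow> real"
  assumes "lsc_on A w" "p \<in> A" "(X \<longlongrightarrow> p) F" "\<forall>\<^sub>F n in F. X n \<in> A" "e > 0"
  shows "\<forall>\<^sub>F n in F. w p - e < w (X n)"
proof -
  have "usc_on A (\<lambda>q. - w q)" unfolding usc_on_def
  proof (intro ballI allI impI)
    fix p c assume p: "p \<in> A" and c: "- w p < c"
    then have "\<forall>\<^sub>F q in at p within A. - c < w q" using assms(1) unfolding lsc_on_def by auto
    then show "\<forall>\<^sub>F q in at p within A. - w q < c" by (rule eventually_mono) auto
  qed
  from usc_seq[OF this assms(2-5)] show ?thesis by (rule eventually_mono) auto
qed

lemma simplex_compact: "compact (simplex_D :: (real^'n::finite) set)"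
proof -
  have "simplex_D = {x::real^'n. \<forall>k. 0 \<le> x$k} \<inter> {x. (\<Sum>k\<in>UNIV. x $ k) \<le> 1}"
    by (auto simp: simplex_D_def)
  moreover have "closed {x::real^'n. \<forall>k. 0 \<le> x$k}"
    by (intro closed_Collect_all closed_Collect_le continuous_on_const continuous_on_component continuous_on_id)
  moreover have "closed {x::real^'n. (\<Sum>k\<in>UNIV. x $ k) \<le> 1}"
    by (intro closed_Collect_le continuous_on_const continuous_on_sum continuous_on_component continuous_on_id)
  ultimately have "closed (simplex_D :: (real^'n) set)" by (metis closed_Int)
  moreover have "bounded (simplex_D :: (real^'n) set)" unfolding bounded_iff using simplex_norm by blast
  ultimately show ?thesis by (simp add: compact_eq_bounded_closed)
qed

lemma inv_sub_tendsto: "strict_mono r \<Longrightarrow> (\<lambda>n. 1 / (real (r n) + 1)) \<longlonglongrightarrow> 0"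
proof -
  assume r: "strict_mono r"
  have "((\<lambda>n. inverse (real (Suc n))) \<circ> r) \<longlonglongrightarrow> 0"
    using LIMSEQ_subseq_LIMSEQ[OF LIMSEQ_inverse_real_of_nat r] .
  then show ?thesis by (simp add: o_def inverse_eq_divide add.commute)
qed

lemma att:
  fixes u v :: "'a::metric_space \<Rightarrow> real" and c :: "'a \<times> 'a \<Rightarrow> real"
  assumes K: "compact K" "K \<noteq> {}" "K \<subseteq> A \<times> A" and us: "usc_on A u" and ls: "lsc_on A v"
    and uB: "\<forall>p\<in>A. \<bar>u p\<bar> \<le> B" and vB: "\<forall>p\<in>A. \<bar>v p\<bar> \<le> B" and c: "continuous_on UNIV c"
  shows "\<exists>w\<in>K. \<forall>w'\<in>K. u (fst w') - v (snd w') - c w' \<le> u (fst w) - v (snd w) - c w"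
proof -
  define F where "F w = u (fst w) - v (snd w) - c w" for w
  obtain w0 where w0: "w0 \<in> K" "\<forall>w\<in>K. c w0 \<le> c w"
    using continuous_attains_inf[OF K(1,2) continuous_on_subset[OF c]] by auto
  have Fb: "F w \<le> 2*B - c w0" if "w \<in> K" for w
  proof -
    have "fst w \<in> A" "snd w \<in> A" using that K(3) by auto
    then have "u (fst w) \<le> B" "- v (snd w) \<le> B" using uB vB by fastforce+
    moreover have "c w0 \<le> c w" using w0(2) that by blast
    ultimately show ?thesis by (simp add: F_def)
  qed
  have bdd: "bdd_above (F ` K)" using Fb by (auto intro!: bdd_aboveI)
  define M where "M = Sup (F ` K)"
  have "\<forall>n::nat. \<exists>w\<in>K. M - 1/(real n + 1) < F w"
  proof
    fix n :: nat
    have "M - 1/(real n + 1) < M" by simp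
    then show "\<exists>w\<in>K. M - 1/(real n + 1) < F w"
      unfolding M_def using less_cSup_iff[of "F ` K"] bdd K(2) by auto
  qed
  then obtain W where W: "\<And>n. W n \<in> K" "\<And>n. M - 1/(real n + 1) < F (W n)" by metis
  obtain l r where l: "l \<in> K" and r: "strict_mono r" and lim: "(W \<circ> r) \<longlonglongrightarrow> l"
    using seq_compactE[OF compact_imp_seq_compact[OF K(1)], of W] W(1) by blast
  have lA: "fst l \<in> A" "snd l \<in> A" using l K(3) by auto
  have WA: "\<forall>\<^sub>F n in sequentially. fst ((W \<circ> r) n) \<in> A" "\<forall>\<^sub>F n in sequentially. snd ((W \<circ> r) n) \<in> A"
  proof -
    have "fst (W n) \<in> A \<and> snd (W n) \<in> A" for n using W(1)[of n] K(3) by (cases "W n") auto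
    then show "\<forall>\<^sub>F n in sequentially. fst ((W \<circ> r) n) \<in> A" "\<forall>\<^sub>F n in sequentially. snd ((W \<circ> r) n) \<in> A"
      by (simp_all add: always_eventually)
  qed
  have "M \<le> F l"
  proof (rule field_le_epsilon)
    fix e :: real assume e: "e > 0"
    have e4: "e/4 > 0" using e by simp
    have ev1: "\<forall>\<^sub>F n in sequentially. u (fst ((W \<circ> r) n)) < u (fst l) + e/4"
      by (rule usc_seq[OF us lA(1) tendsto_fst[OF lim] WA(1) e4])
    have ev2: "\<forall>\<^sub>F n in sequentially. v (snd l) - e/4 < v (snd ((W \<circ> r) n))"
      by (rule lsc_seq[OF ls lA(2) tendsto_snd[OF lim] WA(2) e4])
    have "((\<lambda>n. c ((W \<circ> r) n)) \<longlongrightarrow> c l) sequentially"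
    proof -
      have "isCont c l" using c by (simp add: continuous_on_eq_continuous_at del: split_paired_All)
      from isCont_tendsto_compose[OF this lim] show ?thesis by (simp add: o_def)
    qed
    then have ev3: "\<forall>\<^sub>F n in sequentially. c l - e/4 < c ((W \<circ> r) n)"
      using order_tendstoD(1)[of _ "c l" _ "c l - e/4"] e4 by simp
    have ev4: "\<forall>\<^sub>F n in sequentially. 1 / (real (r n) + 1) < e/4"
      using order_tendstoD(2)[OF inv_sub_tendsto[OF r] e4] .
    from ev1 ev2 ev3 ev4 have "\<forall>\<^sub>F n in sequentially. M < F l + e"
    proof eventually_elim
      case (elim n)
      have "M - 1/(real (r n) + 1) < F (W (r n))" by (rule W(2))
      then show ?case using elim unfolding F_def o_def by linarith
    qed
    from eventually_happens[OF this] have "M < F l + e" by simp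
    then show "M \<le> F l + e" by simp
  qed
  moreover have "F w' \<le> M" if "w' \<in> K" for w' unfolding M_def using bdd that by (intro cSup_upper) auto
  ultimately have "\<forall>w'\<in>K. F w' \<le> F l" by (meson order_trans)
  then show ?thesis using l unfolding F_def by blast
qed

lemma final_arith:
  fixes \<eta> I en JJ \<Lambda> Bf K Nz Lf B nz Ld PP :: real
  assumes en: "en > 0" and a: "2*\<eta> + I/en \<le> JJ" and b: "JJ \<le> \<Lambda>*(Bf*K*Nz/(2*en) + Lf*2*B*nz)"
    and c: "\<bar>I\<bar> \<le> Ld*Nz" and Nz: "0 \<le> Nz" "Nz \<le> PP" and pos: "\<Lambda> \<ge> 0" "Bf \<ge> 0" "K \<ge> 0" "Ld \<ge> 0"
  shows "2*\<eta> \<le> (2*Ld + \<Lambda>*Bf*K) * (PP/(2*en)) + 2*\<Lambda>*Lf*B*nz"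
proof -
  have "- I \<le> Ld*Nz" using c by linarith
  then have "(- I)/en \<le> Ld*Nz/en" using en by (intro divide_right_mono) auto
  then have h1: "- (I/en) \<le> Ld*Nz/en" by simp
  have "Ld*Nz \<le> Ld*PP" using Nz pos by (simp add: mult_left_mono)
  then have "Ld*Nz/en \<le> Ld*PP/en" using en by (simp add: divide_right_mono)
  also have "\<dots> = 2*Ld*(PP/(2*en))" using en by simp
  finally have h2: "Ld*Nz/en \<le> 2*Ld*(PP/(2*en))" .
  have "Bf*K*Nz \<le> Bf*K*PP" using Nz pos by (simp add: mult_left_mono)
  then have "Bf*K*Nz/(2*en) \<le> Bf*K*PP/(2*en)" using en by (simp add: divide_right_mono)
  then have "\<Lambda>*(Bf*K*Nz/(2*en)) \<le> \<Lambda>*(Bf*K*PP/(2*en))" using pos(1) by (rule mult_left_mono)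
  moreover have "\<Lambda>*(Bf*K*PP/(2*en)) = \<Lambda>*Bf*K*(PP/(2*en))" by simp
  ultimately have h3: "\<Lambda>*(Bf*K*Nz/(2*en)) \<le> \<Lambda>*Bf*K*(PP/(2*en))" by simp
  have e1: "\<Lambda>*(Bf*K*Nz/(2*en) + Lf*2*B*nz) = \<Lambda>*(Bf*K*Nz/(2*en)) + 2*\<Lambda>*Lf*B*nz" by (simp add: algebra_simps)
  have e2: "(2*Ld + \<Lambda>*Bf*K) * (PP/(2*en)) = 2*Ld*(PP/(2*en)) + \<Lambda>*Bf*K*(PP/(2*en))" by (simp add: algebra_simps)
  show ?thesis using a b h1 h2 h3 e1 e2 by linarith
qed

theorem proposition3p6:
  fixes f0 :: "real^'n \<Rightarrow> real" and f :: "'n \<Rightarrow> real^'n \<Rightarrow> real"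
    and lam gam :: "'n \<Rightarrow> 'n \<Rightarrow> real" and lamO lamI gamO gamI :: "'n \<Rightarrow> real"
    and u v :: "(real^'n) \<times> real \<Rightarrow> real"
  assumes f0_lip: "\<exists>C. C-lipschitz_on simplex_D f0"
    and f_lip: "\<And>k. \<exists>C. C-lipschitz_on simplex_D (f k)"
    and f0_nonneg: "\<And>x. x \<in> simplex_D \<Longrightarrow> f0 x \<ge> 0"
    and f_nonneg: "\<And>k x. x \<in> simplex_D \<Longrightarrow> f k x \<ge> 0"
    and lam_pos: "\<And>i j. i \<noteq> j \<Longrightarrow> lam i j > 0"
    and lamO_pos: "\<And>i. lamO i > 0"
    and lamI_pos: "\<And>j. lamI j > 0"
    and gam_range: "\<And>i j. i \<noteq> j \<Longrightarrow> 0 < gam i j \<and> gam i j \<le> 1"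
    and gamO_range: "\<And>i. 0 < gamO i \<and> gamO i \<le> 1"
    and gamI_range: "\<And>j. 0 < gamI j \<and> gamI j \<le> 1"
    and sub: "visc_sub f0 f lam lamO lamI gam gamO gamI u"
    and super: "visc_super f0 f lam lamO lamI gam gamO gamI v"
    and init: "\<And>x. x \<in> simplex_D \<Longrightarrow> u (x, 0) \<le> v (x, 0)"
  shows "\<forall>x\<in>simplex_D. \<forall>t>0. u (x, t) \<le> v (x, t)"
proof (rule ccontr)
  assume "\<not> (\<forall>x\<in>simplex_D. \<forall>t>0. u (x, t) \<le> v (x, t))"
  then obtain x1 t1 where x1: "x1 \<in> simplex_D" and t1: "t1 > 0" and gt: "u (x1,t1) > v (x1,t1)"
    by (auto simp: not_le)
  interpret S: setting f0 f lam gam lamO lamI gamO gamI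
    by (rule setting.intro) (use f0_nonneg f_nonneg lam_pos lamO_pos lamI_pos gam_range gamO_range gamI_range in auto)
  have us: "usc_on dom_st u" and bu: "bounded (u ` dom_st)" using sub by (auto simp: visc_sub_def)
  have ls: "lsc_on dom_st v" and bv: "bounded (v ` dom_st)" using super by (auto simp: visc_super_def)
  obtain Bu where Bu: "\<forall>p\<in>dom_st. \<bar>u p\<bar> \<le> Bu" using bu unfolding bounded_iff by auto
  obtain Bv where Bv: "\<forall>p\<in>dom_st. \<bar>v p\<bar> \<le> Bv" using bv unfolding bounded_iff by auto
  define B where "B = \<bar>Bu\<bar> + \<bar>Bv\<bar>"
  have B0: "B \<ge> 0" by (simp add: B_def)
  have uB: "\<forall>p\<in>dom_st. \<bar>u p\<bar> \<le> B" and vB: "\<forall>p\<in>dom_st. \<bar>v p\<bar> \<le> B"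
    using Bu Bv unfolding B_def by force+
  have lf0: "lipb f0" using f0_lip lipb_of_lip by blast
  have lfk: "lipb (f k)" for k using f_lip[of k] lipb_of_lip by blast
  define g where "g opt = (case opt of None \<Rightarrow> f0 | Some k \<Rightarrow> f k)" for opt
  have "lipb (g opt)" for opt by (cases opt) (simp_all add: g_def lf0 lfk)
  from lipb_family[of g, OF this]
  obtain Lf Bf where Lf: "Lf \<ge> 0" "Bf \<ge> 0"
    and LB: "\<forall>i. \<forall>x\<in>simplex_D. \<forall>y\<in>simplex_D. \<bar>g i x - g i y\<bar> \<le> Lf * norm (x - y) \<and> \<bar>g i x\<bar> \<le> Bf"
    by blast
  have f0L: "\<bar>f0 x - f0 y\<bar> \<le> Lf * norm (x - y)" "\<bar>f0 x\<bar> \<le> Bf" if "x \<in> simplex_D" "y \<in> simplex_D" for x y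
    using spec[OF LB, of None] that by (simp_all add: g_def)
  have fL: "\<bar>f k x - f k y\<bar> \<le> Lf * norm (x - y)" "\<bar>f k x\<bar> \<le> Bf" if "x \<in> simplex_D" "y \<in> simplex_D" for k x y
    using spec[OF LB, of "Some k"] that by (simp_all add: g_def)
  obtain Ld where Ld: "Ld \<ge> 0"
    and LdB: "\<forall>x\<in>simplex_D. \<forall>y\<in>simplex_D. \<bar>inner (x - y) (drift f0 f x - drift f0 f y)\<bar> \<le> Ld * inner (x - y) (x - y)"
    using drift_bound[of f0 f, OF lf0 lfk] by blast
  define \<Lambda> where "\<Lambda> = (\<Sum>i\<in>UNIV. \<Sum>j\<in>UNIV - {i}. lam i j) + (\<Sum>i\<in>UNIV. lamO i) + (\<Sum>j\<in>UNIV. lamI j)"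
  have \<Lambda>0: "\<Lambda> \<ge> 0" unfolding \<Lambda>_def using lam_pos lamO_pos lamI_pos
    by (intro add_nonneg_nonneg sum_nonneg) (auto simp: less_imp_le)
  define KK where "KK = (3 + real CARD('n))^2"
  have KK0: "KK \<ge> 0" by (simp add: KK_def)
  define m where "m = u (x1,t1) - v (x1,t1)"
  have m0: "m > 0" using gt by (simp add: m_def)
  define \<eta> where "\<eta> = m / (4 * t1)"
  have \<eta>0: "\<eta> > 0" using m0 t1 by (simp add: \<eta>_def)
  have x1t1: "(x1,t1) \<in> dom_st" using x1 t1 by (simp add: dom_st_def)
  have m2B: "m \<le> 2 * B" using uB vB x1t1 unfolding m_def by fastforce
  define T where "T = 2 * B / \<eta> + 1"
  have \<eta>t1: "\<eta> * t1 = m / 4" using t1 by (simp add: \<eta>_def)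
  have t1T: "t1 \<le> T"
  proof -
    have "\<eta> * t1 \<le> \<eta> * (2 * B / \<eta>)" using \<eta>t1 m2B \<eta>0 m0 by simp
    then have "t1 \<le> 2 * B / \<eta>" using \<eta>0 by (simp add: mult_le_cancel_left_pos) (simp add: le_divide_eq mult.commute)
    then show ?thesis by (simp add: T_def)
  qed
  define K :: "(((real^'n) \<times> real) \<times> ((real^'n) \<times> real)) set"
    where "K = (simplex_D \<times> {0..T}) \<times> (simplex_D \<times> {0..T})"
  have Kc: "compact K" unfolding K_def by (intro compact_Times simplex_compact compact_Icc)
  have x1K: "((x1,t1),(x1,t1)) \<in> K" using x1 t1 t1T by (simp add: K_def)
  have KA: "K \<subseteq> dom_st \<times> dom_st" by (auto simp: K_def dom_st_def)
  define c where "c \<epsilon> w = inner (fst w - snd w) (fst w - snd w) / (2*\<epsilon>) + \<eta> * (snd (fst w) + snd (snd w))" for \<epsilon> :: real and w :: "((real^'n) \<times> real) \<times> ((real^'n) \<times> real)"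
  have Phic: "Phi u v \<epsilon> \<eta> p q = u p - v q - c \<epsilon> (p, q)" for \<epsilon> p q by (simp add: Phi_def c_def)
  have diag: "Phi u v \<epsilon> \<eta> p p = u p - v p - 2 * \<eta> * snd p" for \<epsilon> p by (simp add: Phi_def)
  have MAX: "\<exists>w\<in>K. (\<forall>p\<in>dom_st. \<forall>q\<in>dom_st. Phi u v \<epsilon> \<eta> p q \<le> Phi u v \<epsilon> \<eta> (fst w) (snd w)) \<and> m/2 \<le> Phi u v \<epsilon> \<eta> (fst w) (snd w)"
    if e: "\<epsilon> > 0" for \<epsilon>
  proof -
    have cc: "continuous_on UNIV (c \<epsilon>)" unfolding c_def[abs_def] by (intro continuous_intros) (use e in auto)
    obtain w where w: "w \<in> K" and wm: "\<forall>w'\<in>K. u (fst w') - v (snd w') - c \<epsilon> w' \<le> u (fst w) - v (snd w) - c \<epsilon> w"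
      using att[OF Kc _ KA us ls uB vB cc] x1K by blast
    have wm': "\<forall>w'\<in>K. Phi u v \<epsilon> \<eta> (fst w') (snd w') \<le> Phi u v \<epsilon> \<eta> (fst w) (snd w)" using wm by (simp add: Phic)
    have dv: "m/2 \<le> Phi u v \<epsilon> \<eta> (fst w) (snd w)"
    proof -
      have "Phi u v \<epsilon> \<eta> (x1,t1) (x1,t1) = m/2" unfolding diag using \<eta>t1 by (simp add: m_def)
      then show ?thesis using wm' x1K by force
    qed
    have "Phi u v \<epsilon> \<eta> p q \<le> Phi u v \<epsilon> \<eta> (fst w) (snd w)" if p: "p \<in> dom_st" and q: "q \<in> dom_st" for p q
    proof (cases "(p,q) \<in> K")
      case True then show ?thesis using wm' by force
    next
      case False
      then have "snd p > T \<or> snd q > T" using p q by (cases p, cases q) (auto simp: K_def dom_st_def)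
      moreover have "snd p \<ge> 0" "snd q \<ge> 0" using p q by (auto simp: dom_st_def)
      ultimately have "\<eta> * (snd p + snd q) \<ge> \<eta> * T" using \<eta>0 by (intro mult_left_mono) auto
      moreover have "\<eta> * T = 2 * B + \<eta>" using \<eta>0 by (simp add: T_def field_simps)
      moreover have "u p \<le> B" "- v q \<le> B" using uB vB p q by fastforce+
      moreover have "inner (p - q) (p - q) / (2*\<epsilon>) \<ge> 0" using e by simp
      ultimately have "Phi u v \<epsilon> \<eta> p q < 0" unfolding Phi_def using \<eta>0 by linarith
      then show ?thesis using dv m0 by linarith
    qed
    then show ?thesis using w dv by blast
  qed
  define \<epsilon> where "\<epsilon> n = 1 / (real n + 1)" for n :: nat
  have \<epsilon>0: "\<epsilon> n > 0" for n by (simp add: \<epsilon>_def)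
  have "\<forall>n. \<exists>w. w \<in> K \<and> (\<forall>p\<in>dom_st. \<forall>q\<in>dom_st. Phi u v (\<epsilon> n) \<eta> p q \<le> Phi u v (\<epsilon> n) \<eta> (fst w) (snd w)) \<and> m/2 \<le> Phi u v (\<epsilon> n) \<eta> (fst w) (snd w)"
    using MAX[OF \<epsilon>0] by blast
  then obtain W where WK: "\<And>n. W n \<in> K"
    and Wmax: "\<And>n. \<forall>p\<in>dom_st. \<forall>q\<in>dom_st. Phi u v (\<epsilon> n) \<eta> p q \<le> Phi u v (\<epsilon> n) \<eta> (fst (W n)) (snd (W n))"
    and Wm: "\<And>n. m/2 \<le> Phi u v (\<epsilon> n) \<eta> (fst (W n)) (snd (W n))"
    by metis
  obtain l r where lK: "l \<in> K" and r: "strict_mono r" and lim: "(W \<circ> r) \<longlonglongrightarrow> l"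
    using seq_compactE[OF compact_imp_seq_compact[OF Kc], of W] WK by blast
  define p where "p n = fst (W (r n))" for n
  define q where "q n = snd (W (r n))" for n
  define en where "en n = \<epsilon> (r n)" for n
  have en0: "en n > 0" for n by (simp add: en_def \<epsilon>0)
  have plim: "p \<longlonglongrightarrow> fst l" using tendsto_fst[OF lim] unfolding p_def[abs_def] by (simp add: o_def)
  have qlim: "q \<longlonglongrightarrow> snd l" using tendsto_snd[OF lim] unfolding q_def[abs_def] by (simp add: o_def)
  have pA: "p n \<in> dom_st" "q n \<in> dom_st" for n using WK[of "r n"] KA by (auto simp: p_def q_def mem_Times_iff)
  have lA: "fst l \<in> dom_st" "snd l \<in> dom_st" using lK KA by (auto simp: mem_Times_iff)
  have pmax: "\<forall>a\<in>dom_st. \<forall>b\<in>dom_st. Phi u v (en n) \<eta> a b \<le> Phi u v (en n) \<eta> (p n) (q n)" for n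
    using Wmax[of "r n"] by (simp add: p_def q_def en_def)
  have pm: "m/2 \<le> Phi u v (en n) \<eta> (p n) (q n)" for n using Wm[of "r n"] by (simp add: p_def q_def en_def)
  define PP where "PP n = inner (p n - q n) (p n - q n)" for n
  define G where "G n = u (p n) - v (q n) - \<eta> * (snd (p n) + snd (q n))" for n
  have PhiG: "Phi u v (en n) \<eta> (p n) (q n) = G n - PP n / (2 * en n)" for n by (simp add: Phi_def G_def PP_def)
  have snn: "snd (p n) \<ge> 0" "snd (q n) \<ge> 0" for n using pA[of n] by (auto simp: dom_st_def)
  have PP0: "PP n \<ge> 0" for n by (simp add: PP_def)
  have PPb: "PP n \<le> 4 * B * en n" for n
  proof -
    have "G n \<le> 2 * B"
    proof -
      have "u (p n) \<le> B" "- v (q n) \<le> B" using uB vB pA[of n] by fastforce+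
      moreover have "\<eta> * (snd (p n) + snd (q n)) \<ge> 0" using \<eta>0 snn[of n] by simp
      ultimately show ?thesis unfolding G_def by linarith
    qed
    then have "PP n / (2 * en n) \<le> 2 * B" using pm[of n] m0 unfolding PhiG by linarith
    then show ?thesis using en0[of n] by (simp add: divide_le_eq mult.commute mult.left_commute)
  qed
  have enlim: "en \<longlonglongrightarrow> 0" using inv_sub_tendsto[OF r] unfolding en_def[abs_def] \<epsilon>_def by simp
  have PPlim0: "PP \<longlonglongrightarrow> 0"
  proof (rule tendsto_sandwich[of "\<lambda>n. 0" PP sequentially "\<lambda>n. 4 * B * en n"])
    show "\<forall>\<^sub>F n in sequentially. 0 \<le> PP n" "\<forall>\<^sub>F n in sequentially. PP n \<le> 4 * B * en n"
      using PP0 PPb by (auto intro: always_eventually)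
    show "(\<lambda>n. 0) \<longlonglongrightarrow> (0::real)" by simp
    show "(\<lambda>n. 4 * B * en n) \<longlonglongrightarrow> 0" using tendsto_mult_left[OF enlim, of "4*B"] by simp
  qed
  have "PP \<longlonglongrightarrow> inner (fst l - snd l) (fst l - snd l)"
    unfolding PP_def[abs_def] by (intro tendsto_intros plim qlim)
  then have "inner (fst l - snd l) (fst l - snd l) = 0" using PPlim0 LIMSEQ_unique by blast
  then have lsame: "snd l = fst l" by simp
  define L where "L = fst l"
  have LA: "L \<in> dom_st" using lA by (simp add: L_def)
  have qlim': "q \<longlonglongrightarrow> L" using qlim lsame by (simp add: L_def)
  have plim': "p \<longlonglongrightarrow> L" using plim by (simp add: L_def)
  define A where "A = u L - v L - 2 * \<eta> * snd L"
  have Gev: "\<forall>\<^sub>F n in sequentially. G n < A + e" if e: "e > 0" for e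
  proof -
    have e3: "e/3 > 0" using e by simp
    have ev1: "\<forall>\<^sub>F n in sequentially. u (p n) < u L + e/3"
      using usc_seq[OF us LA plim' _ e3] pA by (auto intro: always_eventually)
    have ev2: "\<forall>\<^sub>F n in sequentially. v L - e/3 < v (q n)"
      using lsc_seq[OF ls LA qlim' _ e3] pA by (auto intro: always_eventually)
    have "(\<lambda>n. \<eta> * (snd (p n) + snd (q n))) \<longlonglongrightarrow> \<eta> * (snd L + snd L)"
      by (intro tendsto_intros plim' qlim')
    then have ev3: "\<forall>\<^sub>F n in sequentially. \<eta> * (snd L + snd L) - e/3 < \<eta> * (snd (p n) + snd (q n))"
      using order_tendstoD(1)[of _ "\<eta> * (snd L + snd L)" _ "\<eta> * (snd L + snd L) - e/3"] e3 by simp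
    from ev1 ev2 ev3 show ?thesis
    proof eventually_elim
      case (elim n)
      have "\<eta> * (snd L + snd L) = 2 * \<eta> * snd L" by simp
      with elim show ?case unfolding G_def A_def by linarith
    qed
  qed
  have GA: "A \<le> G n - PP n / (2 * en n)" for n
  proof -
    have "Phi u v (en n) \<eta> L L \<le> Phi u v (en n) \<eta> (p n) (q n)" using pmax[of n] LA by blast
    then show ?thesis unfolding PhiG diag A_def by simp
  qed
  have Plim: "(\<lambda>n. PP n / (2 * en n)) \<longlonglongrightarrow> 0"
  proof (rule order_tendstoI)
    fix a :: real assume "a < 0"
    then show "\<forall>\<^sub>F n in sequentially. a < PP n / (2 * en n)"
      using PP0 en0 by (auto intro!: always_eventually) (smt (verit) divide_nonneg_pos)
  next
    fix a :: real assume a: "0 < a"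
    from Gev[OF a] show "\<forall>\<^sub>F n in sequentially. PP n / (2 * en n) < a"
      by (rule eventually_mono) (use GA in \<open>smt (verit)\<close>)
  qed
  have mA: "m/2 \<le> A"
  proof (rule field_le_epsilon)
    fix e :: real assume e: "e > 0"
    from Gev[OF e] have "\<forall>\<^sub>F n in sequentially. m/2 < A + e"
    proof (rule eventually_mono)
      fix n assume "G n < A + e"
      moreover have "m/2 \<le> G n - PP n / (2 * en n)" using pm[of n] unfolding PhiG .
      moreover have "PP n / (2 * en n) \<ge> 0" using PP0[of n] en0[of n] by simp
      ultimately show "m/2 < A + e" by linarith
    qed
    from eventually_happens[OF this] show "m/2 \<le> A + e" by simp
  qed
  have sL: "snd L > 0"
  proof (rule ccontr)
    assume "\<not> snd L > 0"
    then have "snd L = 0" using LA by (auto simp: dom_st_def)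
    moreover have "fst L \<in> simplex_D" using LA by (auto simp: dom_st_def)
    ultimately have "u L \<le> v L" using init[of "fst L"] by (metis prod.collapse)
    then show False using mA m0 \<eta>0 \<open>snd L = 0\<close> unfolding A_def by simp
  qed
  have evpos: "\<forall>\<^sub>F n in sequentially. snd (p n) > 0 \<and> snd (q n) > 0"
  proof -
    have "(\<lambda>n. snd (p n)) \<longlonglongrightarrow> snd L" "(\<lambda>n. snd (q n)) \<longlonglongrightarrow> snd L"
      by (intro tendsto_intros plim' qlim')+
    from order_tendstoD(1)[OF this(1) sL] order_tendstoD(1)[OF this(2) sL]
    show ?thesis by eventually_elim auto
  qed
  define nz where "nz n = norm (fst (p n) - fst (q n))" for n
  have nzlim: "nz \<longlonglongrightarrow> 0"
  proof -
    have "nz \<longlonglongrightarrow> norm (fst L - fst L)" unfolding nz_def[abs_def] by (intro tendsto_intros plim' qlim')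
    then show ?thesis by simp
  qed
  define C1 where "C1 = 2*Ld + \<Lambda>*Bf*KK"
  define C2 where "C2 = 2*\<Lambda>*Lf*B"
  have "(\<lambda>n. C1 * (PP n / (2 * en n)) + C2 * nz n) \<longlonglongrightarrow> C1 * 0 + C2 * 0"
    by (intro tendsto_intros Plim nzlim)
  then have evsmall: "\<forall>\<^sub>F n in sequentially. C1 * (PP n / (2 * en n)) + C2 * nz n < 2 * \<eta>"
    using order_tendstoD(2)[of _ 0 _ "2*\<eta>"] \<eta>0 by simp
  have key: "2 * \<eta> \<le> C1 * (PP n / (2 * en n)) + C2 * nz n" if pos: "snd (p n) > 0" "snd (q n) > 0" for n
  proof -
    obtain xn tn where pn: "p n = (xn, tn)" by (cases "p n")
    obtain yn sn where qn: "q n = (yn, sn)" by (cases "q n")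
    have xn: "xn \<in> simplex_D" and yn: "yn \<in> simplex_D" using pA[of n] pn qn by (auto simp: dom_st_def)
    have tn: "tn > 0" and sn: "sn > 0" using pos pn qn by auto
    have mx: "\<forall>a\<in>dom_st. \<forall>b\<in>dom_st. Phi u v (en n) \<eta> a b \<le> Phi u v (en n) \<eta> (xn,tn) (yn,sn)"
      using pmax[of n] pn qn by simp
    have c1: "2*\<eta> + inner (xn - yn) (drift f0 f xn - drift f0 f yn) / en n
     \<le> Jop f0 f lam lamO lamI gam gamO gamI (\<lambda>x'. u (x',tn)) xn - Jop f0 f lam lamO lamI gam gamO gamI (\<lambda>y'. v (y',sn)) yn"
      by (rule S.core1[OF sub super en0 xn yn tn sn mx])
    have c2: "Jop f0 f lam lamO lamI gam gamO gamI (\<lambda>x'. u (x',tn)) xn - Jop f0 f lam lamO lamI gam gamO gamI (\<lambda>y'. v (y',sn)) yn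
     \<le> \<Lambda> * (Bf * KK * inner (xn - yn) (xn - yn) / (2*en n) + Lf * 2 * B * norm (xn - yn))"
      unfolding \<Lambda>_def KK_def
      by (rule S.core2[OF en0 xn yn less_imp_le[OF tn] less_imp_le[OF sn] mx vB f0L[OF xn yn] fL[OF xn yn]])
    have c3: "\<bar>inner (xn - yn) (drift f0 f xn - drift f0 f yn)\<bar> \<le> Ld * inner (xn - yn) (xn - yn)"
      using LdB xn yn by blast
    have c4: "inner (xn - yn) (xn - yn) \<le> PP n" by (simp add: PP_def pn qn)
    have "2*\<eta> \<le> (2*Ld + \<Lambda>*Bf*KK) * (PP n/(2*en n)) + 2*\<Lambda>*Lf*B*norm (xn - yn)"
      by (rule final_arith[OF en0 c1 c2 c3 _ c4 \<Lambda>0 Lf(2) KK0 Ld]) simp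
    then show ?thesis by (simp add: C1_def C2_def nz_def pn qn mult.assoc)
  qed
  from evpos evsmall have "\<forall>\<^sub>F n in sequentially. False"
    by eventually_elim (use key in fastforce)
  then show False by simp
qed

end
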